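(* Let $E$ be a closed MLTS expression and $A$ a type. If the typing judgment $\vdash E : A$ is derivable in the MLTS type system and the evaluation judgment $\vdash E\Downarrow V$ is derivable, then $\vdash V : A$ is derivable.
   Context: MLTS is an extension of core ML whose abstract syntax consists of simply typed meta-level $\lambda$-terms modulo $\alpha\beta\eta$, with expression formers: functions $\mathrm{lam}$, application $\mathrm{app}$, $\mathrm{let}$, $\mathrm{fix}$, constructor applications $\mathrm{variant}\,c\,[\ldots]$, pairs, $\mathrm{new}\,(\lambda X.E)$ (concretely \texttt{new X in E}), nominal abstraction in data $X\backslash E$, its elimination $r\,@\,t_1\ldots t_n$, and $\mathrm{match}$ with clauses built from implicit pattern variables ($\mathrm{all}$), $\mathrm{nab}\,X\;\mathrm{in}\;R$, and $p \to u$. Nominals are fresh constants introduced by the generic quantifier $\nabla$ ($\nabla X.\varphi$ holds iff $\varphi[c/X]$ for a fresh nominal $c$). Types include ML types, function types $A\to B$, and binding types $A\Rightarrow B$. Some primitive (user-defined datatype) types are declared open, written $\vdash A\ \mathrm{open}$; nominals may only have open types (e.g. \texttt{int} is not open). Typing judgments: $\Gamma\vdash M:A$; $\Gamma\vdash A : R : B$ (clause $R$ with pattern type $A$ and right-hand-side type $B$); $\Gamma\vdash p : A \dashv \Delta$ (pattern $p$ of type $A$ producing pattern-variable context $\Delta$). Contexts assign types to variables and nominals. Rules (besides standard ML rules for variables, application, functions, let, let rec, built-ins): $\Gamma\vdash X\backslash M : A\Rightarrow B$ if $\Gamma,X:A\vdash M:B$ and $A$ open; $\Gamma\vdash r\,@\,t_1\ldots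 t_n : A$ if $\Gamma\vdash r:A_1\Rightarrow\cdots\Rightarrow A_n\Rightarrow A$ and $\Gamma\vdash t_i:A_i$; $\Gamma\vdash C(t_1,\dots,t_n):B$ if $C:A_1,\dots,A_n\to B$ and $\Gamma\vdash t_i:A_i$; $\Gamma\vdash(M,N):A*B$ if $\Gamma\vdash M:A$, $\Gamma\vdash N:B$; $\Gamma\vdash \texttt{new } X \texttt{ in } M : B$ if $\Gamma,X:A\vdash M:B$ and $A$ open; $\Gamma\vdash \texttt{match } t \texttt{ with } R_1|\ldots|R_n : A$ if $\Gamma\vdash t:B$ and $\Gamma\vdash B:R_i:A$ for all $i$; $\Gamma\vdash A:\texttt{nab } X \texttt{ in } R:B$ if $\Gamma,X:C\vdash A:R:B$ and $C$ open; $\Gamma\vdash A:(L\to R):B$ if $\Gamma\vdash L:A\dashv\Delta$ and $\Gamma,\Delta\vdash R:B$; pattern rules: $\Gamma\vdash r\,@\,X_1\ldots X_n : A \dashv r:A_1\Rightarrow\cdots\Rightarrow A_n\Rightarrow A$ if $\Gamma\vdash X_i:A_i$ and each $A_i$ open; $\Gamma\vdash x:A\dashv x:A$; $\Gamma\vdash(p,q):A*B\dashv\Delta_1,\Delta_2$ and $\Gamma\vdash C(p_1,\dots,p_n):B\dashv\Delta_1,\dots,\Delta_n$ componentwise. Context extensions always use fresh names. Evaluation $\vdash E\Downarrow V$ (big-step, in the logic $\mathcal{G}$): $\mathrm{lam}\,R\Downarrow\mathrm{lam}\,R$; constructor arguments evaluated componentwise; $\mathrm{new}(\lambda X.E\,X)\Downarrow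 V$ if $\nabla X.(E\,X\Downarrow V)$; $\mathrm{app}\,M\,N\Downarrow V$ if $M\Downarrow\mathrm{lam}\,R$, $N\Downarrow U$, $R\,U\Downarrow V$; $\mathrm{let}\,M\,R\Downarrow V$ if $M\Downarrow U$, $R\,U\Downarrow V$; $\mathrm{fix}\,R\Downarrow V$ if $R(\mathrm{fix}\,R)\Downarrow V$; $M\,@\,X\Downarrow V$ if $M\Downarrow X\backslash R$-form $\mathrm{backslash}\,R$ and $R\,X\Downarrow V$; $\mathrm{backslash}(\lambda X.E\,X)\Downarrow\mathrm{backslash}(\lambda X.V\,X)$ if $\nabla X.(E\,X\Downarrow V\,X)$; $\mathrm{match}\,T\,(Rule::Rules)\Downarrow V$ if $\mathrm{clause}(T,Rule,U)$ and $U\Downarrow V$, or if no $u$ satisfies $\mathrm{clause}(T,Rule,u)$ and $\mathrm{match}\,T\,Rules\Downarrow V$. Here $\mathrm{clause}(T,\mathrm{all}(\lambda x.P\,x),U)$ if $\exists x.\,\mathrm{clause}(T,P\,x,U)$, and $\mathrm{clause}(T,\mathrm{nab}\,Z_1\ldots\mathrm{nab}\,Z_m.(p\Longrightarrow u),U)$ if $T$ matches $P$ (constructor-wise; a nominal $c$ matches $\mathrm{pnom}\,c$; any term $x$ matches $\mathrm{pvar}\,x$) and $(\lambda Z_1\ldots\lambda Z_m.(p\Longrightarrow u))\unrhd(P\Longrightarrow U)$, where $s\unrhd t$ (nominal abstraction) holds iff $s$ is $\lambda$-convertible to the term obtained from $t$ by abstracting some distinct nominals $c_1,\dots,c_n$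 occurring in it. Match clauses satisfy the standing restrictions: each pattern variable occurs exactly once in its pattern; every pattern subexpression $r\,@\,X_1\ldots X_n$ has $r$ a pattern variable and $X_1,\dots,X_n$ distinct nominals bound (by \texttt{nab} or backslash) within the scope of $r$; every \texttt{nab}-bound nominal has at least one rigid occurrence in the pattern, i.e. an occurrence not inside the scope of an \texttt{@}. *)

theory Defs
  imports Main
begin

section \<open>MLTS: types and syntax (locally de Bruijn, nominals as named constants)\<close>

text \<open>Types: int (a built-in ML type, not open), user-declared primitive (datatype)
  types, function types, binding types A => B, and products.\<close>
datatype ty = TInt | TPrim string | TArr ty ty | TBind ty ty | TProd ty ty

text \<open>Bound variables are de Bruijn
  indices (Var); this covers ML variables, new/backslash/nab-bound nominals and
  pattern variables.  Nom c is a nominal constant (introduced by the nabla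
  quantifier during evaluation).  Binders: Lam, Let (2nd arg), Fix, New, Back,
  RAll, RNab, PBack (each binds one index).  At r t is r @ t; r @ t1 ... tn is
  At (... (At r t1) ...) tn.  PV r [X1,...,Xn] is the pattern r @ X1 ... Xn
  (n = 0: plain pattern variable); PNom X is a nominal occurring in a pattern.\<close>
datatype tm =
    Var nat | Nom nat | IntLit int
  | Lam tm | App tm tm | Let tm tm | Fix tm
  | Con string "tm list" | Pair tm tm
  | New tm | Back tm | At tm tm
  | Match tm "rule list"
and rule = RAll rule | RNab rule | RArr pat tm
and pat = PV tm "tm list" | PNom tm | PPair pat pat | PCon string "pat list" | PBack pat

primrec lift :: "nat \<Rightarrow> tm \<Rightarrow> tm"
  and lift_r :: "nat \<Rightarrow> rule \<Rightarrow> rule"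
  and lift_p :: "nat \<Rightarrow> pat \<Rightarrow> pat" where
  "lift k (Var i) = (if i < k then Var i else Var (Suc i))"
| "lift k (Nom c) = Nom c"
| "lift k (IntLit n) = IntLit n"
| "lift k (Lam t) = Lam (lift (Suc k) t)"
| "lift k (App t u) = App (lift k t) (lift k u)"
| "lift k (Let t u) = Let (lift k t) (lift (Suc k) u)"
| "lift k (Fix t) = Fix (lift (Suc k) t)"
| "lift k (Con c ts) = Con c (map (lift k) ts)"
| "lift k (Pair t u) = Pair (lift k t) (lift k u)"
| "lift k (New t) = New (lift (Suc k) t)"
| "lift k (Back t) = Back (lift (Suc k) t)"
| "lift k (At t u) = At (lift k t) (lift k u)"
| "lift k (Match t rs) = Match (lift k t) (map (lift_r k) rs)"
| "lift_r k (RAll r) = RAll (lift_r (Suc k) r)"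
| "lift_r k (RNab r) = RNab (lift_r (Suc k) r)"
| "lift_r k (RArr p u) = RArr (lift_p k p) (lift k u)"
| "lift_p k (PV x ys) = PV (lift k x) (map (lift k) ys)"
| "lift_p k (PNom t) = PNom (lift k t)"
| "lift_p k (PPair p q) = PPair (lift_p k p) (lift_p k q)"
| "lift_p k (PCon c ps) = PCon c (map (lift_p k) ps)"
| "lift_p k (PBack p) = PBack (lift_p (Suc k) p)"

primrec inst :: "nat \<Rightarrow> tm \<Rightarrow> tm \<Rightarrow> tm"
  and inst_r :: "nat \<Rightarrow> tm \<Rightarrow> rule \<Rightarrow> rule"
  and inst_p :: "nat \<Rightarrow> tm \<Rightarrow> pat \<Rightarrow> pat" where
  "inst k s (Var i) = (if i < k then Var i else if i = k then s else Var (i - 1))"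
| "inst k s (Nom c) = Nom c"
| "inst k s (IntLit n) = IntLit n"
| "inst k s (Lam t) = Lam (inst (Suc k) (lift 0 s) t)"
| "inst k s (App t u) = App (inst k s t) (inst k s u)"
| "inst k s (Let t u) = Let (inst k s t) (inst (Suc k) (lift 0 s) u)"
| "inst k s (Fix t) = Fix (inst (Suc k) (lift 0 s) t)"
| "inst k s (Con c ts) = Con c (map (inst k s) ts)"
| "inst k s (Pair t u) = Pair (inst k s t) (inst k s u)"
| "inst k s (New t) = New (inst (Suc k) (lift 0 s) t)"
| "inst k s (Back t) = Back (inst (Suc k) (lift 0 s) t)"
| "inst k s (At t u) = At (inst k s t) (inst k s u)"
| "inst k s (Match t rs) = Match (inst k s t) (map (inst_r k s) rs)"
| "inst_r k s (RAll r) = RAll (inst_r (Suc k) (lift 0 s) r)"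
| "inst_r k s (RNab r) = RNab (inst_r (Suc k) (lift 0 s) r)"
| "inst_r k s (RArr p u) = RArr (inst_p k s p) (inst k s u)"
| "inst_p k s (PV x ys) = PV (inst k s x) (map (inst k s) ys)"
| "inst_p k s (PNom t) = PNom (inst k s t)"
| "inst_p k s (PPair p q) = PPair (inst_p k s p) (inst_p k s q)"
| "inst_p k s (PCon c ps) = PCon c (map (inst_p k s) ps)"
| "inst_p k s (PBack p) = PBack (inst_p (Suc k) (lift 0 s) p)"

primrec close :: "nat \<Rightarrow> nat \<Rightarrow> tm \<Rightarrow> tm"
  and close_r :: "nat \<Rightarrow> nat \<Rightarrow> rule \<Rightarrow> rule"
  and close_p :: "nat \<Rightarrow> nat \<Rightarrow> pat \<Rightarrow> pat" where
  "close k c (Var i) = (if i < k then Var i else Var (Suc i))"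
| "close k c (Nom d) = (if d = c then Var k else Nom d)"
| "close k c (IntLit n) = IntLit n"
| "close k c (Lam t) = Lam (close (Suc k) c t)"
| "close k c (App t u) = App (close k c t) (close k c u)"
| "close k c (Let t u) = Let (close k c t) (close (Suc k) c u)"
| "close k c (Fix t) = Fix (close (Suc k) c t)"
| "close k c (Con d ts) = Con d (map (close k c) ts)"
| "close k c (Pair t u) = Pair (close k c t) (close k c u)"
| "close k c (New t) = New (close (Suc k) c t)"
| "close k c (Back t) = Back (close (Suc k) c t)"
| "close k c (At t u) = At (close k c t) (close k c u)"
| "close k c (Match t rs) = Match (close k c t) (map (close_r k c) rs)"
| "close_r k c (RAll r) = RAll (close_r (Suc k) c r)"
| "close_r k c (RNab r) = RNab (close_r (Suc k) c r)"
| "close_r k c (RArr p u) = RArr (close_p k c p) (close k c u)"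
| "close_p k c (PV x ys) = PV (close k c x) (map (close k c) ys)"
| "close_p k c (PNom t) = PNom (close k c t)"
| "close_p k c (PPair p q) = PPair (close_p k c p) (close_p k c q)"
| "close_p k c (PCon d ps) = PCon d (map (close_p k c) ps)"
| "close_p k c (PBack p) = PBack (close_p (Suc k) c p)"

primrec noms :: "tm \<Rightarrow> nat set"
  and noms_r :: "rule \<Rightarrow> nat set"
  and noms_p :: "pat \<Rightarrow> nat set" where
  "noms (Var i) = {}"
| "noms (Nom c) = {c}"
| "noms (IntLit n) = {}"
| "noms (Lam t) = noms t"
| "noms (App t u) = noms t \<union> noms u"
| "noms (Let t u) = noms t \<union> noms u"
| "noms (Fix t) = noms t"
| "noms (Con c ts) = \<Union> (set (map noms ts))"
| "noms (Pair t u) = noms t \<union> noms u"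
| "noms (New t) = noms t"
| "noms (Back t) = noms t"
| "noms (At t u) = noms t \<union> noms u"
| "noms (Match t rs) = noms t \<union> \<Union> (set (map noms_r rs))"
| "noms_r (RAll r) = noms_r r"
| "noms_r (RNab r) = noms_r r"
| "noms_r (RArr p u) = noms_p p \<union> noms u"
| "noms_p (PV x ys) = noms x \<union> \<Union> (set (map noms ys))"
| "noms_p (PNom t) = noms t"
| "noms_p (PPair p q) = noms_p p \<union> noms_p q"
| "noms_p (PCon c ps) = \<Union> (set (map noms_p ps))"
| "noms_p (PBack p) = noms_p p"

primrec lc :: "nat \<Rightarrow> tm \<Rightarrow> bool"
  and lc_r :: "nat \<Rightarrow> rule \<Rightarrow> bool"
  and lc_p :: "nat \<Rightarrow> pat \<Rightarrow> bool" where
  "lc k (Var i) = (i < k)"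
| "lc k (Nom c) = True"
| "lc k (IntLit n) = True"
| "lc k (Lam t) = lc (Suc k) t"
| "lc k (App t u) = (lc k t \<and> lc k u)"
| "lc k (Let t u) = (lc k t \<and> lc (Suc k) u)"
| "lc k (Fix t) = lc (Suc k) t"
| "lc k (Con c ts) = list_all (lc k) ts"
| "lc k (Pair t u) = (lc k t \<and> lc k u)"
| "lc k (New t) = lc (Suc k) t"
| "lc k (Back t) = lc (Suc k) t"
| "lc k (At t u) = (lc k t \<and> lc k u)"
| "lc k (Match t rs) = (lc k t \<and> list_all (lc_r k) rs)"
| "lc_r k (RAll r) = lc_r (Suc k) r"
| "lc_r k (RNab r) = lc_r (Suc k) r"
| "lc_r k (RArr p u) = (lc_p k p \<and> lc k u)"
| "lc_p k (PV x ys) = (lc k x \<and> list_all (lc k) ys)"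
| "lc_p k (PNom t) = lc k t"
| "lc_p k (PPair p q) = (lc_p k p \<and> lc_p k q)"
| "lc_p k (PCon c ps) = list_all (lc_p k) ps"
| "lc_p k (PBack p) = lc_p (Suc k) p"

section \<open>Standing restrictions on match clauses\<close>

datatype kind = KAll | KNab | KPB

primrec pvc :: "nat \<Rightarrow> pat \<Rightarrow> nat" where
  "pvc i (PV x ys) = (if x = Var i then 1 else 0)"
| "pvc i (PNom t) = 0"
| "pvc i (PPair p q) = pvc i p + pvc i q"
| "pvc i (PCon c ps) = sum_list (map (pvc i) ps)"
| "pvc i (PBack p) = pvc (Suc i) p"

text \<open>Rigid occurrence (not under an @) of the nominal bound at index i.\<close>
primrec rig :: "nat \<Rightarrow> pat \<Rightarrow> bool" where
  "rig i (PV x ys) = False"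
| "rig i (PNom t) = (t = Var i)"
| "rig i (PPair p q) = (rig i p \<or> rig i q)"
| "rig i (PCon c ps) = (True \<in> set (map (rig i) ps))"
| "rig i (PBack p) = rig (Suc i) p"

text \<open>Well-formedness of a pattern: K lists the kinds of the binders local to the
  clause (innermost first); indices beyond length K refer to enclosing binders.\<close>
primrec pwf :: "kind list \<Rightarrow> pat \<Rightarrow> bool" where
  "pwf K (PV x ys) = (\<exists>i js. x = Var i \<and> i < length K \<and> K ! i = KAll \<and> ys = map Var js
        \<and> distinct js \<and> (\<forall>j\<in>set js. j < i \<and> K ! j \<noteq> KAll))"
| "pwf K (PNom t) = ((\<exists>j. t = Var j \<and> (length K \<le> j \<or> K ! j \<noteq> KAll)) \<or> (\<exists>c. t = Nom c))"
| "pwf K (PPair p q) = (pwf K p \<and> pwf K q)"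
| "pwf K (PCon c ps) = list_all (pwf K) ps"
| "pwf K (PBack p) = pwf (KPB # K) p"

text \<open>A clause has the shape all x1..xk. nab Z1..Zm. (p -> u) (pattern variables are
  implicit, hence outermost); each pattern variable occurs exactly once in p and every
  nab-bound nominal occurs rigidly in p.\<close>
primrec restr :: "tm \<Rightarrow> bool"
  and rrestr :: "kind list \<Rightarrow> rule \<Rightarrow> bool" where
  "restr (Var i) = True"
| "restr (Nom c) = True"
| "restr (IntLit n) = True"
| "restr (Lam t) = restr t"
| "restr (App t u) = (restr t \<and> restr u)"
| "restr (Let t u) = (restr t \<and> restr u)"
| "restr (Fix t) = restr t"
| "restr (Con c ts) = list_all restr ts"
| "restr (Pair t u) = (restr t \<and> restr u)"
| "restr (New t) = restr t"
| "restr (Back t) = restr t"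
| "restr (At t u) = (restr t \<and> restr u)"
| "restr (Match t rs) = (restr t \<and> list_all (rrestr []) rs)"
| "rrestr K (RAll r) = (KNab \<notin> set K \<and> rrestr (KAll # K) r)"
| "rrestr K (RNab r) = rrestr (KNab # K) r"
| "rrestr K (RArr p u) = (pwf K p \<and> restr u \<and>
      (\<forall>i < length K. (K ! i = KAll \<longrightarrow> pvc i p = 1) \<and> (K ! i = KNab \<longrightarrow> rig i p)))"

section \<open>Type system\<close>

definition open_ty :: "(string \<Rightarrow> bool) \<Rightarrow> ty \<Rightarrow> bool" where
  "open_ty opn A \<longleftrightarrow> (\<exists>b. A = TPrim b \<and> opn b)"

primrec binds :: "ty list \<Rightarrow> ty \<Rightarrow> ty" where
  "binds [] A = A"
| "binds (B # Bs) A = TBind B (binds Bs A)"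

text \<open>Parameters: opn b (the primitive type b is declared open), csig c = Some (As, b)
  (constructor c : A1,...,An -> b), Phi (types of nominal constants),
  Gamma (types of the de Bruijn-bound variables/nominals, index 0 first).\<close>
inductive has_ty :: "(string \<Rightarrow> bool) \<Rightarrow> (string \<Rightarrow> (ty list \<times> string) option)
      \<Rightarrow> (nat \<Rightarrow> ty option) \<Rightarrow> ty list \<Rightarrow> tm \<Rightarrow> ty \<Rightarrow> bool"
  and rule_ty :: "(string \<Rightarrow> bool) \<Rightarrow> (string \<Rightarrow> (ty list \<times> string) option)
      \<Rightarrow> (nat \<Rightarrow> ty option) \<Rightarrow> ty list \<Rightarrow> ty \<Rightarrow> rule \<Rightarrow> ty \<Rightarrow> bool"
  and pat_ty :: "(string \<Rightarrow> bool) \<Rightarrow> (string \<Rightarrow> (ty list \<times> string) option)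
      \<Rightarrow> (nat \<Rightarrow> ty option) \<Rightarrow> ty list \<Rightarrow> pat \<Rightarrow> ty \<Rightarrow> bool"
  for opn csig \<Phi> where
  t_var: "i < length \<Gamma> \<Longrightarrow> has_ty opn csig \<Phi> \<Gamma> (Var i) (\<Gamma> ! i)"
| t_nom: "\<Phi> c = Some A \<Longrightarrow> has_ty opn csig \<Phi> \<Gamma> (Nom c) A"
| t_int: "has_ty opn csig \<Phi> \<Gamma> (IntLit n) TInt"
| t_lam: "has_ty opn csig \<Phi> (A # \<Gamma>) M B \<Longrightarrow> has_ty opn csig \<Phi> \<Gamma> (Lam M) (TArr A B)"
| t_app: "has_ty opn csig \<Phi> \<Gamma> M (TArr A B) \<Longrightarrow> has_ty opn csig \<Phi> \<Gamma> N A \<Longrightarrow> has_ty opn csig \<Phi> \<Gamma> (App M N) B"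
| t_let: "has_ty opn csig \<Phi> \<Gamma> M A \<Longrightarrow> has_ty opn csig \<Phi> (A # \<Gamma>) N B \<Longrightarrow> has_ty opn csig \<Phi> \<Gamma> (Let M N) B"
| t_fix: "has_ty opn csig \<Phi> (TArr A B # \<Gamma>) M (TArr A B) \<Longrightarrow> has_ty opn csig \<Phi> \<Gamma> (Fix M) (TArr A B)"
| t_con: "csig c = Some (As, b) \<Longrightarrow> list_all2 (has_ty opn csig \<Phi> \<Gamma>) Ms As
          \<Longrightarrow> has_ty opn csig \<Phi> \<Gamma> (Con c Ms) (TPrim b)"
| t_pair: "has_ty opn csig \<Phi> \<Gamma> M A \<Longrightarrow> has_ty opn csig \<Phi> \<Gamma> N B \<Longrightarrow> has_ty opn csig \<Phi> \<Gamma> (Pair M N) (TProd A B)"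
| t_new: "open_ty opn A \<Longrightarrow> has_ty opn csig \<Phi> (A # \<Gamma>) M B \<Longrightarrow> has_ty opn csig \<Phi> \<Gamma> (New M) B"
| t_back: "open_ty opn A \<Longrightarrow> has_ty opn csig \<Phi> (A # \<Gamma>) M B \<Longrightarrow> has_ty opn csig \<Phi> \<Gamma> (Back M) (TBind A B)"
| t_at: "has_ty opn csig \<Phi> \<Gamma> M (TBind A B) \<Longrightarrow> has_ty opn csig \<Phi> \<Gamma> N A \<Longrightarrow> has_ty opn csig \<Phi> \<Gamma> (At M N) B"
| t_match: "has_ty opn csig \<Phi> \<Gamma> M B \<Longrightarrow> list_all (\<lambda>R. rule_ty opn csig \<Phi> \<Gamma> B R A) Rs
          \<Longrightarrow> has_ty opn csig \<Phi> \<Gamma> (Match M Rs) A"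
| r_all: "rule_ty opn csig \<Phi> (C # \<Gamma>) A R B \<Longrightarrow> rule_ty opn csig \<Phi> \<Gamma> A (RAll R) B"
| r_nab: "open_ty opn C \<Longrightarrow> rule_ty opn csig \<Phi> (C # \<Gamma>) A R B \<Longrightarrow> rule_ty opn csig \<Phi> \<Gamma> A (RNab R) B"
| r_arr: "pat_ty opn csig \<Phi> \<Gamma> p A \<Longrightarrow> has_ty opn csig \<Phi> \<Gamma> u B \<Longrightarrow> rule_ty opn csig \<Phi> \<Gamma> A (RArr p u) B"
| p_v: "i < length \<Gamma> \<Longrightarrow> \<Gamma> ! i = binds As A
        \<Longrightarrow> list_all2 (\<lambda>Y B. has_ty opn csig \<Phi> \<Gamma> Y B \<and> open_ty opn B) Ys As
        \<Longrightarrow> pat_ty opn csig \<Phi> \<Gamma> (PV (Var i) Ys) A"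
| p_nom: "has_ty opn csig \<Phi> \<Gamma> X A \<Longrightarrow> open_ty opn A \<Longrightarrow> pat_ty opn csig \<Phi> \<Gamma> (PNom X) A"
| p_pair: "pat_ty opn csig \<Phi> \<Gamma> p A \<Longrightarrow> pat_ty opn csig \<Phi> \<Gamma> q B \<Longrightarrow> pat_ty opn csig \<Phi> \<Gamma> (PPair p q) (TProd A B)"
| p_con: "csig c = Some (As, b) \<Longrightarrow> list_all2 (pat_ty opn csig \<Phi> \<Gamma>) ps As
          \<Longrightarrow> pat_ty opn csig \<Phi> \<Gamma> (PCon c ps) (TPrim b)"
| p_back: "open_ty opn A \<Longrightarrow> pat_ty opn csig \<Phi> (A # \<Gamma>) p B \<Longrightarrow> pat_ty opn csig \<Phi> \<Gamma> (PBack p) (TBind A B)"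

section \<open>Evaluation\<close>

fun inst_backs :: "tm \<Rightarrow> tm list \<Rightarrow> tm option" where
  "inst_backs x [] = Some x"
| "inst_backs (Back b) (y # ys) = inst_backs (inst 0 y b) ys"
| "inst_backs x (y # ys) = None"

inductive pmatch :: "tm \<Rightarrow> pat \<Rightarrow> bool" where
  m_v: "inst_backs x ys = Some T \<Longrightarrow> pmatch T (PV x ys)"
| m_nom: "pmatch (Nom c) (PNom (Nom c))"
| m_pair: "pmatch T1 p \<Longrightarrow> pmatch T2 q \<Longrightarrow> pmatch (Pair T1 T2) (PPair p q)"
| m_con: "list_all2 pmatch Ts ps \<Longrightarrow> pmatch (Con c Ts) (PCon c ps)"
| m_back: "c \<notin> noms t \<union> noms_p p \<Longrightarrow> pmatch (inst 0 (Nom c) t) (inst_p 0 (Nom c) p)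
           \<Longrightarrow> pmatch (Back t) (PBack p)"

fun open_nabs :: "nat list \<Rightarrow> rule \<Rightarrow> rule" where
  "open_nabs [] R = R"
| "open_nabs (c # cs) (RNab R) = open_nabs cs (inst_r 0 (Nom c) R)"
| "open_nabs (c # cs) R = R"

text \<open>clause T R U, with nominal abstraction for the nab block: the Z_i are replaced by
  distinct nominals c_i, not occurring in the clause, occurring in P ==> U.\<close>
inductive clause :: "tm \<Rightarrow> rule \<Rightarrow> tm \<Rightarrow> bool" where
  c_all: "lc 0 x \<Longrightarrow> clause T (inst_r 0 x R) U \<Longrightarrow> clause T (RAll R) U"
| c_nab: "length cs = m \<Longrightarrow> distinct cs
          \<Longrightarrow> (\<forall>c\<in>set cs. c \<notin> noms_r ((RNab ^^ m) (RArr p u)) \<and> c \<in> noms_p P \<union> noms U)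
          \<Longrightarrow> open_nabs cs ((RNab ^^ m) (RArr p u)) = RArr P U
          \<Longrightarrow> pmatch T P
          \<Longrightarrow> clause T ((RNab ^^ m) (RArr p u)) U"

inductive eval :: "tm \<Rightarrow> tm \<Rightarrow> bool"
  and evalm :: "tm \<Rightarrow> rule list \<Rightarrow> tm \<Rightarrow> bool" where
  e_lam: "eval (Lam R) (Lam R)"
| e_nom: "eval (Nom c) (Nom c)"
| e_int: "eval (IntLit n) (IntLit n)"
| e_con: "list_all2 eval Ms Vs \<Longrightarrow> eval (Con c Ms) (Con c Vs)"
| e_pair: "eval M V \<Longrightarrow> eval N W \<Longrightarrow> eval (Pair M N) (Pair V W)"
| e_new: "c \<notin> noms E \<union> noms V \<Longrightarrow> eval (inst 0 (Nom c) E) V \<Longrightarrow> eval (New E) V"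
| e_app: "eval M (Lam R) \<Longrightarrow> eval N U \<Longrightarrow> eval (inst 0 U R) V \<Longrightarrow> eval (App M N) V"
| e_let: "eval M U \<Longrightarrow> eval (inst 0 U R) V \<Longrightarrow> eval (Let M R) V"
| e_fix: "eval (inst 0 (Fix R) R) V \<Longrightarrow> eval (Fix R) V"
| e_at: "eval M (Back R) \<Longrightarrow> eval (inst 0 X R) V \<Longrightarrow> eval (At M X) V"
| e_back: "c \<notin> noms E \<Longrightarrow> eval (inst 0 (Nom c) E) W \<Longrightarrow> eval (Back E) (Back (close 0 c W))"
| e_match: "eval M T \<Longrightarrow> evalm T Rs V \<Longrightarrow> eval (Match M Rs) V"
| em_hit: "clause T R U \<Longrightarrow> eval U V \<Longrightarrow> evalm T (R # Rs) V"
| em_skip: "\<not> (\<exists>u. clause T R u) \<Longrightarrow> evalm T Rs V \<Longrightarrow> evalm T (R # Rs) V"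

end

theory Submission
  imports Defs
begin


primrec sb :: "nat \<Rightarrow> tm list \<Rightarrow> tm \<Rightarrow> tm"
  and sb_r :: "nat \<Rightarrow> tm list \<Rightarrow> rule \<Rightarrow> rule"
  and sb_p :: "nat \<Rightarrow> tm list \<Rightarrow> pat \<Rightarrow> pat" where
  "sb k ws (Var i) = (if i < k then Var i else if i - k < length ws then ws ! (i - k) else Var (i - length ws))"
| "sb k ws (Nom c) = Nom c"
| "sb k ws (IntLit n) = IntLit n"
| "sb k ws (Lam t) = Lam (sb (Suc k) ws t)"
| "sb k ws (App t u) = App (sb k ws t) (sb k ws u)"
| "sb k ws (Let t u) = Let (sb k ws t) (sb (Suc k) ws u)"
| "sb k ws (Fix t) = Fix (sb (Suc k) ws t)"
| "sb k ws (Con c ts) = Con c (map (sb k ws) ts)"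
| "sb k ws (Pair t u) = Pair (sb k ws t) (sb k ws u)"
| "sb k ws (New t) = New (sb (Suc k) ws t)"
| "sb k ws (Back t) = Back (sb (Suc k) ws t)"
| "sb k ws (At t u) = At (sb k ws t) (sb k ws u)"
| "sb k ws (Match t rs) = Match (sb k ws t) (map (sb_r k ws) rs)"
| "sb_r k ws (RAll r) = RAll (sb_r (Suc k) ws r)"
| "sb_r k ws (RNab r) = RNab (sb_r (Suc k) ws r)"
| "sb_r k ws (RArr p u) = RArr (sb_p k ws p) (sb k ws u)"
| "sb_p k ws (PV x ys) = PV (sb k ws x) (map (sb k ws) ys)"
| "sb_p k ws (PNom t) = PNom (sb k ws t)"
| "sb_p k ws (PPair p q) = PPair (sb_p k ws p) (sb_p k ws q)"
| "sb_p k ws (PCon c ps) = PCon c (map (sb_p k ws) ps)"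
| "sb_p k ws (PBack p) = PBack (sb_p (Suc k) ws p)"

lemma lc_mono: "lc j t \<Longrightarrow> j \<le> k \<Longrightarrow> lc k t"
  "lc_r j r \<Longrightarrow> j \<le> k \<Longrightarrow> lc_r k r" "lc_p j p \<Longrightarrow> j \<le> k \<Longrightarrow> lc_p k p"
  by (induction t and r and p arbitrary: j k and j k and j k) (auto simp: list_all_iff)

lemma lift_lc: "lc j t \<Longrightarrow> j \<le> k \<Longrightarrow> lift k t = t"
  "lc_r j r \<Longrightarrow> j \<le> k \<Longrightarrow> lift_r k r = r" "lc_p j p \<Longrightarrow> j \<le> k \<Longrightarrow> lift_p k p = p"
  by (induction t and r and p arbitrary: j k and j k and j k) (auto simp: list_all_iff intro!: map_idI)

lemma lift0_closed[simp]: "lc 0 t \<Longrightarrow> lift k t = t"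
  using lift_lc(1) by blast

lemma inst_lc: "lc j t \<Longrightarrow> j \<le> k \<Longrightarrow> inst k s t = t"
  "lc_r j r \<Longrightarrow> j \<le> k \<Longrightarrow> inst_r k s r = r" "lc_p j p \<Longrightarrow> j \<le> k \<Longrightarrow> inst_p k s p = p"
  by (induction t and r and p arbitrary: j k s and j k s and j k s) (auto simp: list_all_iff intro!: map_idI)

lemma close_inst: "c \<notin> noms t \<Longrightarrow> close k c (inst k (Nom c) t) = t"
  "c \<notin> noms_r r \<Longrightarrow> close_r k c (inst_r k (Nom c) r) = r"
  "c \<notin> noms_p p \<Longrightarrow> close_p k c (inst_p k (Nom c) p) = p"
  by (induction t and r and p arbitrary: k and k and k) (auto intro: map_idI)

lemma noms_lift[simp]: "noms (lift k t) = noms t" "noms_r (lift_r k r) = noms_r r" "noms_p (lift_p k p) = noms_p p"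
  by (induction t and r and p arbitrary: k and k and k) auto

lemma noms_inst: "noms (inst k s t) \<subseteq> noms s \<union> noms t"
  "noms_r (inst_r k s r) \<subseteq> noms s \<union> noms_r r" "noms_p (inst_p k s p) \<subseteq> noms s \<union> noms_p p"
  apply (induction t and r and p arbitrary: k s and k s and k s)
  apply (auto simp: subset_iff)
  apply fastforce+
  done

lemma noms_close: "c \<notin> noms (close k c t)" "c \<notin> noms_r (close_r k c r)" "c \<notin> noms_p (close_p k c p)"
  by (induction t and r and p arbitrary: k and k and k) auto

lemma sb_nil[simp]: "sb k [] t = t" "sb_r k [] r = r" "sb_p k [] p = p"
  by (induction t and r and p arbitrary: k and k and k) (auto intro: map_idI)

lemma inst_sb: "list_all (lc 0) ws \<Longrightarrow> lc 0 x \<Longrightarrow> inst k x (sb (Suc k) ws t) = sb k (x#ws) t"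
  "list_all (lc 0) ws \<Longrightarrow> lc 0 x \<Longrightarrow> inst_r k x (sb_r (Suc k) ws r) = sb_r k (x#ws) r"
  "list_all (lc 0) ws \<Longrightarrow> lc 0 x \<Longrightarrow> inst_p k x (sb_p (Suc k) ws p) = sb_p k (x#ws) p"
proof (induction t and r and p arbitrary: k and k and k)
  case (Var i)
  have "i < k \<or> i = k \<or> k < i" by arith
  then show ?case
  proof (elim disjE)
    assume "k < i"
    then have e: "i - k = Suc (i - Suc k)" by arith
    show ?thesis
    proof (cases "i - Suc k < length ws")
      case True
      then have "lc 0 (ws ! (i - Suc k))" using Var by (auto simp: list_all_iff)
      then show ?thesis using True \<open>k < i\<close> e by (simp add: inst_lc(1)[of 0])
    qed (use \<open>k < i\<close> e in auto)
  qed (use Var in auto)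
qed auto



primrec okt :: "tm \<Rightarrow> bool"
  and okr :: "kind list \<Rightarrow> rule \<Rightarrow> bool"
  and okp :: "kind list \<Rightarrow> pat \<Rightarrow> bool" where
  "okt (Var i) = True"
| "okt (Nom c) = True"
| "okt (IntLit n) = True"
| "okt (Lam t) = okt t"
| "okt (App t u) = (okt t \<and> okt u)"
| "okt (Let t u) = (okt t \<and> okt u)"
| "okt (Fix t) = okt t"
| "okt (Con c ts) = list_all okt ts"
| "okt (Pair t u) = (okt t \<and> okt u)"
| "okt (New t) = okt t"
| "okt (Back t) = okt t"
| "okt (At t u) = (okt t \<and> okt u)"
| "okt (Match t rs) = (okt t \<and> list_all (okr []) rs)"
| "okr K (RAll r) = (KNab \<notin> set K \<and> okr (KAll # K) r)"
| "okr K (RNab r) = okr (KNab # K) r"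
| "okr K (RArr p u) = (okp K p \<and> okt u \<and>
      (\<forall>i < length K. (K ! i = KAll \<longrightarrow> pvc i p = 1) \<and> (K ! i = KNab \<longrightarrow> rig i p)))"
| "okp K (PV x ys) = (\<exists>i js. x = Var i \<and> i < length K \<and> K ! i = KAll \<and> ys = map Var js
        \<and> distinct js \<and> (\<forall>j\<in>set js. j < i \<and> K ! j \<noteq> KAll))"
| "okp K (PNom t) = okt t"
| "okp K (PPair p q) = (okp K p \<and> okp K q)"
| "okp K (PCon c ps) = list_all (okp K) ps"
| "okp K (PBack p) = okp (KPB # K) p"

lemma restr_ok: "restr t \<Longrightarrow> okt t" "rrestr K r \<Longrightarrow> okr K r" "pwf K p \<Longrightarrow> okp K p"
  by (induction t and r and p arbitrary: K and K and K) (auto simp: list_all_iff)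

lemma ty_lc:
  "has_ty opn csig \<Phi> \<Gamma> t A \<Longrightarrow> lc (length \<Gamma>) t"
  "rule_ty opn csig \<Phi> \<Gamma> B R A \<Longrightarrow> lc_r (length \<Gamma>) R"
  "pat_ty opn csig \<Phi> \<Gamma> p A \<Longrightarrow> lc_p (length \<Gamma>) p"
  by (induction rule: has_ty_rule_ty_pat_ty.inducts)
     (auto simp: list_all_iff list_all2_conv_all_nth in_set_conv_nth)

lemma ty_phi:
  "has_ty opn csig \<Phi> \<Gamma> t A \<Longrightarrow> (\<forall>c\<in>noms t. \<Phi>' c = \<Phi> c) \<Longrightarrow> has_ty opn csig \<Phi>' \<Gamma> t A"
  "rule_ty opn csig \<Phi> \<Gamma> B R A \<Longrightarrow> (\<forall>c\<in>noms_r R. \<Phi>' c = \<Phi> c) \<Longrightarrow> rule_ty opn csig \<Phi>' \<Gamma> B R A"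
  "pat_ty opn csig \<Phi> \<Gamma> p A \<Longrightarrow> (\<forall>c\<in>noms_p p. \<Phi>' c = \<Phi> c) \<Longrightarrow> pat_ty opn csig \<Phi>' \<Gamma> p A"
proof (induction rule: has_ty_rule_ty_pat_ty.inducts)
  case (t_con c As b \<Gamma> Ms)
  then show ?case
    by (auto intro!: has_ty_rule_ty_pat_ty.intros elim!: list.rel_mono_strong)
next
  case (t_match \<Gamma> M B A Rs)
  then show ?case
    by (auto simp: list_all_iff intro!: has_ty_rule_ty_pat_ty.intros) blast
next
  case (p_v i \<Gamma> As A Ys)
  then show ?case
    by (auto intro!: has_ty_rule_ty_pat_ty.intros elim!: list.rel_mono_strong)
next
  case (p_con c As b \<Gamma> ps)
  then show ?case
    by (auto intro!: has_ty_rule_ty_pat_ty.intros elim!: list.rel_mono_strong)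
qed (auto intro: has_ty_rule_ty_pat_ty.intros)

lemma nth_ins1[simp]: "i < length \<Delta> \<Longrightarrow> (\<Delta> @ C # \<Gamma>) ! i = (\<Delta> @ \<Gamma>) ! i"
  by (simp add: nth_append)
lemma nth_ins2[simp]: "\<not> i < length \<Delta> \<Longrightarrow> (\<Delta> @ C # \<Gamma>) ! (Suc i) = (\<Delta> @ \<Gamma>) ! i"
  by (simp add: nth_append Suc_diff_le)

lemma ty_lift:
  "has_ty opn csig \<Phi> \<Gamma>0 t A \<Longrightarrow> \<forall>\<Delta>. \<Gamma>0 = \<Delta> @ \<Gamma> \<longrightarrow> has_ty opn csig \<Phi> (\<Delta> @ C # \<Gamma>) (lift (length \<Delta>) t) A"
  "rule_ty opn csig \<Phi> \<Gamma>0 B R A \<Longrightarrow> \<forall>\<Delta>. \<Gamma>0 = \<Delta> @ \<Gamma> \<longrightarrow> rule_ty opn csig \<Phi> (\<Delta> @ C # \<Gamma>) B (lift_r (length \<Delta>) R) A"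
  "pat_ty opn csig \<Phi> \<Gamma>0 p A \<Longrightarrow> \<forall>\<Delta>. \<Gamma>0 = \<Delta> @ \<Gamma> \<longrightarrow> pat_ty opn csig \<Phi> (\<Delta> @ C # \<Gamma>) (lift_p (length \<Delta>) p) A"
proof (induction rule: has_ty_rule_ty_pat_ty.inducts)
  case (t_var i \<Gamma>0)
  show ?case
  proof (intro allI impI)
    fix \<Delta> assume "\<Gamma>0 = \<Delta> @ \<Gamma>"
    then show "has_ty opn csig \<Phi> (\<Delta> @ C # \<Gamma>) (lift (length \<Delta>) (Var i)) (\<Gamma>0 ! i)"
      using t_var has_ty_rule_ty_pat_ty.t_var[of i "\<Delta> @ C # \<Gamma>"]
        has_ty_rule_ty_pat_ty.t_var[of "Suc i" "\<Delta> @ C # \<Gamma>"]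
      by auto
  qed
next
  case (t_con c As b \<Gamma> Ms)
  then show ?case
    by (auto intro!: has_ty_rule_ty_pat_ty.intros simp: list_all2_map1 elim!: list.rel_mono_strong)
next
  case (t_match \<Gamma> M B A Rs)
  then show ?case
    by (auto simp: list_all_iff intro!: has_ty_rule_ty_pat_ty.intros)
next
  case (p_v i \<Gamma>0 As A Ys)
  show ?case
  proof (intro allI impI)
    fix \<Delta> assume e: "\<Gamma>0 = \<Delta> @ \<Gamma>"
    have ys: "list_all2 (\<lambda>Y B. has_ty opn csig \<Phi> (\<Delta> @ C # \<Gamma>) Y B \<and> open_ty opn B) (map (lift (length \<Delta>)) Ys) As"
      using p_v(3) e by (auto simp: list_all2_map1 elim!: list.rel_mono_strong)
    show "pat_ty opn csig \<Phi> (\<Delta> @ C # \<Gamma>) (lift_p (length \<Delta>) (PV (Var i) Ys)) A"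
    proof (cases "i < length \<Delta>")
      case True
      then show ?thesis using p_v e ys by (auto intro!: has_ty_rule_ty_pat_ty.p_v)
    next
      case False
      then show ?thesis using p_v e ys
        by (auto intro!: has_ty_rule_ty_pat_ty.p_v)
    qed
  qed
next
  case (p_con c As b \<Gamma> ps)
  then show ?case
    by (auto intro!: has_ty_rule_ty_pat_ty.intros simp: list_all2_map1 elim!: list.rel_mono_strong)
qed (auto intro!: has_ty_rule_ty_pat_ty.intros simp del: append_Cons simp: append_Cons[symmetric])

lemma ty_close:
  "has_ty opn csig \<Phi> \<Gamma>0 t A \<Longrightarrow> \<forall>\<Delta>. \<Gamma>0 = \<Delta> @ \<Gamma> \<longrightarrow> \<Phi> c = Some C \<longrightarrow> has_ty opn csig \<Phi> (\<Delta> @ C # \<Gamma>) (close (length \<Delta>) c t) A"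
  "rule_ty opn csig \<Phi> \<Gamma>0 B R A \<Longrightarrow> \<forall>\<Delta>. \<Gamma>0 = \<Delta> @ \<Gamma> \<longrightarrow> \<Phi> c = Some C \<longrightarrow> rule_ty opn csig \<Phi> (\<Delta> @ C # \<Gamma>) B (close_r (length \<Delta>) c R) A"
  "pat_ty opn csig \<Phi> \<Gamma>0 p A \<Longrightarrow> \<forall>\<Delta>. \<Gamma>0 = \<Delta> @ \<Gamma> \<longrightarrow> \<Phi> c = Some C \<longrightarrow> pat_ty opn csig \<Phi> (\<Delta> @ C # \<Gamma>) (close_p (length \<Delta>) c p) A"
proof (induction rule: has_ty_rule_ty_pat_ty.inducts)
  case (t_var i G0)
  show ?case
  proof (intro allI impI)
    fix \<Delta> assume "G0 = \<Delta> @ \<Gamma>"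
    then show "has_ty opn csig \<Phi> (\<Delta> @ C # \<Gamma>) (close (length \<Delta>) c (Var i)) (G0 ! i)"
      using t_var has_ty_rule_ty_pat_ty.t_var[of i "\<Delta> @ C # \<Gamma>"]
        has_ty_rule_ty_pat_ty.t_var[of "Suc i" "\<Delta> @ C # \<Gamma>"]
      by auto
  qed
next
  case (t_nom d A G)
  show ?case
  proof (intro allI impI)
    fix \<Delta> assume "G = \<Delta> @ \<Gamma>" "\<Phi> c = Some C"
    then show "has_ty opn csig \<Phi> (\<Delta> @ C # \<Gamma>) (close (length \<Delta>) c (Nom d)) A"
      using t_nom has_ty_rule_ty_pat_ty.t_var[of "length \<Delta>" "\<Delta> @ C # \<Gamma>"]
      by (auto intro: has_ty_rule_ty_pat_ty.t_nom)
  qed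
next
  case (t_con c As b G Ms)
  then show ?case
    by (auto intro!: has_ty_rule_ty_pat_ty.intros simp: list_all2_map1 elim!: list.rel_mono_strong)
next
  case (t_match G M B A Rs)
  then show ?case
    by (auto simp: list_all_iff intro!: has_ty_rule_ty_pat_ty.intros)
next
  case (p_v i G0 As A Ys)
  show ?case
  proof (intro allI impI)
    fix \<Delta> assume e: "G0 = \<Delta> @ \<Gamma>" "\<Phi> c = Some C"
    have ys: "list_all2 (\<lambda>Y B. has_ty opn csig \<Phi> (\<Delta> @ C # \<Gamma>) Y B \<and> open_ty opn B) (map (close (length \<Delta>) c) Ys) As"
      using p_v(3) e by (auto simp: list_all2_map1 elim!: list.rel_mono_strong)
    show "pat_ty opn csig \<Phi> (\<Delta> @ C # \<Gamma>) (close_p (length \<Delta>) c (PV (Var i) Ys)) A"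
    proof (cases "i < length \<Delta>")
      case True
      then show ?thesis using p_v e ys by (auto intro!: has_ty_rule_ty_pat_ty.p_v)
    next
      case False
      then show ?thesis using p_v e ys
        by (auto intro!: has_ty_rule_ty_pat_ty.p_v)
    qed
  qed
next
  case (p_con c As b G ps)
  then show ?case
    by (auto intro!: has_ty_rule_ty_pat_ty.intros simp: list_all2_map1 elim!: list.rel_mono_strong)
qed (auto intro!: has_ty_rule_ty_pat_ty.intros simp del: append_Cons simp: append_Cons[symmetric])

lemma ty_lift0: "has_ty opn csig \<Phi> G s C \<Longrightarrow> has_ty opn csig \<Phi> (A # G) (lift 0 s) C"
  using ty_lift(1)[of opn csig \<Phi> G s C G A] by auto

lemma ty_lift0': "has_ty opn csig \<Phi> (D @ G) s C \<Longrightarrow> has_ty opn csig \<Phi> ((A # D) @ G) (lift 0 s) C"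
  using ty_lift0 by fastforce

lemma ty_inst:
  "has_ty opn csig \<Phi> \<Gamma>0 t A \<Longrightarrow> \<forall>\<Delta> s. \<Gamma>0 = \<Delta> @ C # \<Gamma> \<longrightarrow> okt t \<longrightarrow> has_ty opn csig \<Phi> (\<Delta> @ \<Gamma>) s C
     \<longrightarrow> has_ty opn csig \<Phi> (\<Delta> @ \<Gamma>) (inst (length \<Delta>) s t) A"
  "rule_ty opn csig \<Phi> \<Gamma>0 B R A \<Longrightarrow> \<forall>\<Delta> s K. \<Gamma>0 = \<Delta> @ C # \<Gamma> \<longrightarrow> okr K R \<longrightarrow> length K \<le> length \<Delta>
     \<longrightarrow> has_ty opn csig \<Phi> (\<Delta> @ \<Gamma>) s C
     \<longrightarrow> rule_ty opn csig \<Phi> (\<Delta> @ \<Gamma>) B (inst_r (length \<Delta>) s R) A"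
  "pat_ty opn csig \<Phi> \<Gamma>0 p A \<Longrightarrow> \<forall>\<Delta> s K. \<Gamma>0 = \<Delta> @ C # \<Gamma> \<longrightarrow> okp K p \<longrightarrow> length K \<le> length \<Delta>
     \<longrightarrow> has_ty opn csig \<Phi> (\<Delta> @ \<Gamma>) s C
     \<longrightarrow> pat_ty opn csig \<Phi> (\<Delta> @ \<Gamma>) (inst_p (length \<Delta>) s p) A"
proof (induction rule: has_ty_rule_ty_pat_ty.inducts)
  case (t_var i G0)
  show ?case
  proof (intro allI impI)
    fix \<Delta> s assume e: "G0 = \<Delta> @ C # \<Gamma>" and s: "has_ty opn csig \<Phi> (\<Delta> @ \<Gamma>) s C"
    have "i < length \<Delta> \<or> i = length \<Delta> \<or> length \<Delta> < i" by arith
    then show "has_ty opn csig \<Phi> (\<Delta> @ \<Gamma>) (inst (length \<Delta>) s (Var i)) (G0 ! i)"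
    proof (elim disjE)
      assume "length \<Delta> < i"
      then obtain j where "i = Suc j" "\<not> j < length \<Delta>" by (cases i) auto
      then show ?thesis using t_var e has_ty_rule_ty_pat_ty.t_var[of j "\<Delta> @ \<Gamma>"] by auto
    qed (use t_var e s has_ty_rule_ty_pat_ty.t_var[of i "\<Delta> @ \<Gamma>"] in auto)
  qed
next
  case (t_lam A G M B)
  then show ?case
    by (auto intro!: has_ty_rule_ty_pat_ty.intros
        simp del: append_Cons simp: append_Cons[symmetric]) (blast intro: ty_lift0')
next
  case (t_con c As b G Ms)
  then show ?case
    by (auto intro!: has_ty_rule_ty_pat_ty.intros simp: list_all2_map1 list_all_iff elim!: list.rel_mono_strong)
next
  case (t_match G M B A Rs)
  then show ?case
    by (auto simp: list_all_iff intro!: has_ty_rule_ty_pat_ty.intros) (metis list.size(3) zero_le)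
next
  case (p_v i G0 As A Ys)
  show ?case
  proof (intro allI impI)
    fix \<Delta> s K assume e: "G0 = \<Delta> @ C # \<Gamma>" "okp K (PV (Var i) Ys)" "length K \<le> length \<Delta>"
      and s: "has_ty opn csig \<Phi> (\<Delta> @ \<Gamma>) s C"
    have ys: "list_all2 (\<lambda>Y B. has_ty opn csig \<Phi> (\<Delta> @ \<Gamma>) Y B \<and> open_ty opn B) (map (inst (length \<Delta>) s) Ys) As"
      using p_v(3) e s by (auto simp: list_all2_map1 elim!: list.rel_mono_strong)
    have "i < length \<Delta>" using e by auto
    then show "pat_ty opn csig \<Phi> (\<Delta> @ \<Gamma>) (inst_p (length \<Delta>) s (PV (Var i) Ys)) A"
      using p_v e ys by (auto intro!: has_ty_rule_ty_pat_ty.p_v)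
  qed
next
  case (p_con c As b G ps)
  then show ?case
    by (auto intro!: has_ty_rule_ty_pat_ty.intros simp: list_all2_map1 list_all_iff elim!: list.rel_mono_strong) blast
next
  case (t_let G M A N B)
  show ?case
  proof (intro allI impI)
    fix \<Delta> s assume a: "G = \<Delta> @ C # \<Gamma>" "okt (Let M N)" "has_ty opn csig \<Phi> (\<Delta> @ \<Gamma>) s C"
    have 1: "has_ty opn csig \<Phi> (\<Delta> @ \<Gamma>) (inst (length \<Delta>) s M) A" using t_let a by auto
    have 2: "has_ty opn csig \<Phi> (A # \<Delta> @ \<Gamma>) (inst (Suc (length \<Delta>)) (lift 0 s) N) B"
      using t_let(4)[rule_format, of "A # \<Delta>" "lift 0 s"] a ty_lift0[OF a(3)] by simp
    show "has_ty opn csig \<Phi> (\<Delta> @ \<Gamma>) (inst (length \<Delta>) s (Let M N)) B"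
      using 1 2 by (auto intro: has_ty_rule_ty_pat_ty.t_let)
  qed
next
  case (t_fix A B G M)
  show ?case
  proof (intro allI impI)
    fix \<Delta> s assume a: "G = \<Delta> @ C # \<Gamma>" "okt (Fix M)" "has_ty opn csig \<Phi> (\<Delta> @ \<Gamma>) s C"
    have 2: "has_ty opn csig \<Phi> (TArr A B # \<Delta> @ \<Gamma>) (inst (Suc (length \<Delta>)) (lift 0 s) M) (TArr A B)"
      using t_fix(2)[rule_format, of "TArr A B # \<Delta>" "lift 0 s"] a ty_lift0[OF a(3)] by simp
    show "has_ty opn csig \<Phi> (\<Delta> @ \<Gamma>) (inst (length \<Delta>) s (Fix M)) (TArr A B)"
      using 2 by (auto intro: has_ty_rule_ty_pat_ty.t_fix)
  qed
next
  case (t_new A G M B)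
  show ?case
  proof (intro allI impI)
    fix \<Delta> s assume a: "G = \<Delta> @ C # \<Gamma>" "okt (New M)" "has_ty opn csig \<Phi> (\<Delta> @ \<Gamma>) s C"
    have 2: "has_ty opn csig \<Phi> (A # \<Delta> @ \<Gamma>) (inst (Suc (length \<Delta>)) (lift 0 s) M) B"
      using t_new(3)[rule_format, of "A # \<Delta>" "lift 0 s"] a ty_lift0[OF a(3)] by simp
    show "has_ty opn csig \<Phi> (\<Delta> @ \<Gamma>) (inst (length \<Delta>) s (New M)) B"
      using 2 t_new(1) by (auto intro: has_ty_rule_ty_pat_ty.t_new)
  qed
next
  case (t_back A G M B)
  show ?case
  proof (intro allI impI)
    fix \<Delta> s assume a: "G = \<Delta> @ C # \<Gamma>" "okt (Back M)" "has_ty opn csig \<Phi> (\<Delta> @ \<Gamma>) s C"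
    have 2: "has_ty opn csig \<Phi> (A # \<Delta> @ \<Gamma>) (inst (Suc (length \<Delta>)) (lift 0 s) M) B"
      using t_back(3)[rule_format, of "A # \<Delta>" "lift 0 s"] a ty_lift0[OF a(3)] by simp
    show "has_ty opn csig \<Phi> (\<Delta> @ \<Gamma>) (inst (length \<Delta>) s (Back M)) (TBind A B)"
      using 2 t_back(1) by (auto intro: has_ty_rule_ty_pat_ty.t_back)
  qed
next
  case (r_all C' G A R B)
  show ?case
  proof (intro allI impI)
    fix \<Delta> s K assume a: "G = \<Delta> @ C # \<Gamma>" "okr K (RAll R)" "length K \<le> length \<Delta>" "has_ty opn csig \<Phi> (\<Delta> @ \<Gamma>) s C"
    have 2: "rule_ty opn csig \<Phi> (C' # \<Delta> @ \<Gamma>) A (inst_r (Suc (length \<Delta>)) (lift 0 s) R) B"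
      using r_all(2)[rule_format, of "C' # \<Delta>" "KAll # K" "lift 0 s"] a ty_lift0[OF a(4)] by simp
    show "rule_ty opn csig \<Phi> (\<Delta> @ \<Gamma>) A (inst_r (length \<Delta>) s (RAll R)) B"
      using 2 by (auto intro: has_ty_rule_ty_pat_ty.r_all)
  qed
next
  case (r_nab C' G A R B)
  show ?case
  proof (intro allI impI)
    fix \<Delta> s K assume a: "G = \<Delta> @ C # \<Gamma>" "okr K (RNab R)" "length K \<le> length \<Delta>" "has_ty opn csig \<Phi> (\<Delta> @ \<Gamma>) s C"
    have 2: "rule_ty opn csig \<Phi> (C' # \<Delta> @ \<Gamma>) A (inst_r (Suc (length \<Delta>)) (lift 0 s) R) B"
      using r_nab(3)[rule_format, of "C' # \<Delta>" "KNab # K" "lift 0 s"] a ty_lift0[OF a(4)] by simp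
    show "rule_ty opn csig \<Phi> (\<Delta> @ \<Gamma>) A (inst_r (length \<Delta>) s (RNab R)) B"
      using 2 r_nab(1) by (auto intro: has_ty_rule_ty_pat_ty.r_nab)
  qed
next
  case (p_back A G p B)
  show ?case
  proof (intro allI impI)
    fix \<Delta> s K assume a: "G = \<Delta> @ C # \<Gamma>" "okp K (PBack p)" "length K \<le> length \<Delta>" "has_ty opn csig \<Phi> (\<Delta> @ \<Gamma>) s C"
    have 2: "pat_ty opn csig \<Phi> (A # \<Delta> @ \<Gamma>) (inst_p (Suc (length \<Delta>)) (lift 0 s) p) B"
      using p_back(3)[rule_format, of "A # \<Delta>" "KPB # K" "lift 0 s"] a ty_lift0[OF a(4)] by simp
    show "pat_ty opn csig \<Phi> (\<Delta> @ \<Gamma>) (inst_p (length \<Delta>) s (PBack p)) (TBind A B)"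
      using 2 p_back(1) by (auto intro: has_ty_rule_ty_pat_ty.p_back)
  qed
qed (auto intro!: has_ty_rule_ty_pat_ty.intros)



lemma map_var_id: "\<forall>j\<in>set js. f (Var j) = Var j \<Longrightarrow> map f (map Var js) = map Var js"
  by (induction js) auto

lemma map_var_id': "\<forall>j\<in>set js. f (Var j) = Var j \<Longrightarrow> map (f \<circ> Var) js = map Var js"
  by (induction js) auto

lemma okp_PV_fix: "okp K (PV x ys) \<Longrightarrow> length K \<le> k \<Longrightarrow> (\<And>j. j < k \<Longrightarrow> f (Var j) = Var j)
  \<Longrightarrow> f x = x \<and> map f ys = ys"
proof -
  assume a: "okp K (PV x ys)" "length K \<le> k" "\<And>j. j < k \<Longrightarrow> f (Var j) = Var j"
  then obtain i js where b: "x = Var i" "i < length K" "ys = map Var js" "\<forall>j\<in>set js. j < i" by auto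
  then show ?thesis using a(2,3) by (auto intro!: map_idI)
qed

lemma pvc_lift: "True" "True" "okp K p \<Longrightarrow> length K \<le> k \<Longrightarrow> pvc i (lift_p k p) = pvc i p"
  by (induction "x::tm" and "y::rule" and p arbitrary: and and K k i)
     (auto simp: list_all_iff map_var_id intro!: arg_cong[where f=sum_list] map_cong)

lemma rig_lift: "True" "True" "rig i p \<Longrightarrow> i < k \<Longrightarrow> rig i (lift_p k p)"
  by (induction "x::tm" and "y::rule" and p arbitrary: and and i k) auto

lemma ok_lift: "okt t \<Longrightarrow> okt (lift k t)" "okr K r \<Longrightarrow> length K \<le> k \<Longrightarrow> okr K (lift_r k r)"
  "okp K p \<Longrightarrow> length K \<le> k \<Longrightarrow> okp K (lift_p k p)"
proof (induction t and r and p arbitrary: k and K k and K k)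
  case (PV x ys)
  then show ?case using okp_PV_fix[of K x ys k "lift k"] by simp
qed (auto simp: list_all_iff pvc_lift rig_lift)

lemma pvc_inst: "True" "True" "okp K p \<Longrightarrow> length K \<le> k \<Longrightarrow> pvc i (inst_p k s p) = pvc i p"
  by (induction "x::tm" and "y::rule" and p arbitrary: and and K k i s)
     (auto simp: list_all_iff map_var_id intro!: arg_cong[where f=sum_list] map_cong)

lemma rig_inst: "True" "True" "rig i p \<Longrightarrow> i < k \<Longrightarrow> rig i (inst_p k s p)"
  by (induction "x::tm" and "y::rule" and p arbitrary: and and i k s) (auto, blast)

lemma ok_inst: "okt s \<Longrightarrow> okt t \<Longrightarrow> okt (inst k s t)"
  "okt s \<Longrightarrow> okr K r \<Longrightarrow> length K \<le> k \<Longrightarrow> okr K (inst_r k s r)"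
  "okt s \<Longrightarrow> okp K p \<Longrightarrow> length K \<le> k \<Longrightarrow> okp K (inst_p k s p)"
proof (induction t and r and p arbitrary: k s and K k s and K k s)
  case (PV x ys)
  then show ?case using okp_PV_fix[of K x ys k "inst k s"] by simp
qed (auto simp: list_all_iff pvc_inst rig_inst ok_lift)

lemma pvc_close: "True" "True" "okp K p \<Longrightarrow> length K \<le> k \<Longrightarrow> pvc i (close_p k c p) = pvc i p"
  by (induction "x::tm" and "y::rule" and p arbitrary: and and K k i)
     (auto simp: list_all_iff map_var_id intro!: arg_cong[where f=sum_list] map_cong)

lemma rig_close: "True" "True" "rig i p \<Longrightarrow> i < k \<Longrightarrow> rig i (close_p k c p)"
  by (induction "x::tm" and "y::rule" and p arbitrary: and and i k) (auto, blast?)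

lemma ok_close: "okt t \<Longrightarrow> okt (close k c t)"
  "okr K r \<Longrightarrow> length K \<le> k \<Longrightarrow> okr K (close_r k c r)"
  "okp K p \<Longrightarrow> length K \<le> k \<Longrightarrow> okp K (close_p k c p)"
proof (induction t and r and p arbitrary: k and K k and K k)
  case (PV x ys)
  then show ?case using okp_PV_fix[of K x ys k "close k c"] by simp
qed (auto simp: list_all_iff pvc_close rig_close)



primrec used :: "pat \<Rightarrow> nat set" where
  "used (PV x ys) = {j. Var j \<in> set ys}"
| "used (PNom t) = {j. t = Var j}"
| "used (PPair p q) = used p \<union> used q"
| "used (PCon c ps) = \<Union> (set (map used ps))"
| "used (PBack p) = {j. Suc j \<in> used p}"

lemma occ_pvc: "True" "True"
  "pvc j p \<noteq> 0 \<Longrightarrow> k \<le> j \<Longrightarrow> j - k < length ws \<Longrightarrow> noms (ws ! (j - k)) \<subseteq> noms_p (sb_p k ws p)"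
proof (induction "x::tm" and "y::rule" and p arbitrary: and and j k)
  case (PV x ys)
  then have "x = Var j" by (simp split: if_splits)
  then show ?case using PV.prems by auto
next
  case (PPair p q)
  then show ?case by (simp; blast)
next
  case (PCon c ps)
  then obtain q where "q \<in> set ps" "pvc j q \<noteq> 0" by (auto simp: sum_list_eq_0_iff)
  then show ?case using PCon by fastforce
next
  case (PBack p)
  have "noms (ws ! (Suc j - Suc k)) \<subseteq> noms_p (sb_p (Suc k) ws p)"
    by (rule PBack.IH) (use PBack.prems in auto)
  then show ?case by simp
qed auto

lemma occ_rig: "True" "True"
  "rig j p \<Longrightarrow> k \<le> j \<Longrightarrow> j - k < length ws \<Longrightarrow> noms (ws ! (j - k)) \<subseteq> noms_p (sb_p k ws p)"
proof (induction "x::tm" and "y::rule" and p arbitrary: and and j k)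
  case (PCon c ps)
  then obtain q where "q \<in> set ps" "rig j q" by auto
  then show ?case using PCon by fastforce
next
  case (PPair p q)
  then show ?case by (simp; blast)
next
  case (PBack p)
  have "noms (ws ! (Suc j - Suc k)) \<subseteq> noms_p (sb_p (Suc k) ws p)"
    by (rule PBack.IH) (use PBack.prems in auto)
  then show ?case by simp
qed auto

lemma occ_used: "True" "True"
  "j \<in> used p \<Longrightarrow> k \<le> j \<Longrightarrow> j - k < length ws \<Longrightarrow> noms (ws ! (j - k)) \<subseteq> noms_p (sb_p k ws p)"
proof (induction "x::tm" and "y::rule" and p arbitrary: and and j k)
  case (PV x ys)
  have e: "sb k ws (Var j) = ws ! (j - k)" using PV.prems by simp
  have "Var j \<in> set ys" using PV.prems by simp
  then have "ws ! (j - k) \<in> set (map (sb k ws) ys)" using e by (metis image_eqI set_map)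
  then show ?case by auto
next
  case (PPair p q)
  then show ?case by (simp; blast)
next
  case (PCon c ps)
  then obtain q where "q \<in> set ps" "j \<in> used q" by auto
  then show ?case using PCon by fastforce
next
  case (PBack p)
  have "noms (ws ! (Suc j - Suc k)) \<subseteq> noms_p (sb_p (Suc k) ws p)"
    by (rule PBack.IH) (use PBack.prems in auto)
  then show ?case by simp
qed auto

lemma noms_sb: "noms t \<subseteq> noms (sb k ws t)" "noms_r r \<subseteq> noms_r (sb_r k ws r)" "noms_p p \<subseteq> noms_p (sb_p k ws p)"
  by (induction t and r and p arbitrary: k and k and k) fastforce+

lemma noms_nth_inst: "c \<notin> noms s \<Longrightarrow> c \<notin> noms t \<Longrightarrow> c \<notin> noms (inst k s t)"
  using noms_inst(1) by blast

lemma ty_close0: "has_ty opn csig \<Phi> [] W B \<Longrightarrow> \<Phi> c = Some A \<Longrightarrow> has_ty opn csig \<Phi> [A] (close 0 c W) B"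
  using ty_close(1)[of opn csig \<Phi> "[]" W B "[]" c A] by auto

lemma inst_backs_ty:
  "inst_backs x ys = Some T \<Longrightarrow> length ys = length As
   \<Longrightarrow> (\<forall>k<length ys. \<exists>c. ys ! k = Nom c \<and> \<Phi> c = Some (As ! k) \<and> c \<notin> noms x \<and> open_ty opn (As ! k))
   \<Longrightarrow> distinct ys \<Longrightarrow> has_ty opn csig \<Phi> [] T B \<Longrightarrow> okt T
   \<Longrightarrow> has_ty opn csig \<Phi> [] x (binds As B) \<and> okt x"
proof (induction x ys arbitrary: As rule: inst_backs.induct)
  case (1 x)
  then show ?case by auto
next
  case (2 b y ys)
  from 2(3) obtain A1 As' where As: "As = A1 # As'" by (cases As) auto
  from 2(4)[rule_format, of 0] As obtain c where c: "y = Nom c" "\<Phi> c = Some A1" "c \<notin> noms b" "open_ty opn A1"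
    by auto
  let ?W = "inst 0 (Nom c) b"
  have IH: "has_ty opn csig \<Phi> [] ?W (binds As' B) \<and> okt ?W"
  proof (rule 2(1)[unfolded c(1)])
    show "inst_backs ?W ys = Some T" using 2(2) c by simp
    show "length ys = length As'" using 2(3) As by simp
    show "\<forall>k<length ys. \<exists>c. ys ! k = Nom c \<and> \<Phi> c = Some (As' ! k) \<and> c \<notin> noms ?W \<and> open_ty opn (As' ! k)"
    proof (intro allI impI)
      fix k assume k: "k < length ys"
      from 2(4)[rule_format, of "Suc k"] k As obtain d where d: "ys ! k = Nom d" "\<Phi> d = Some (As' ! k)"
        "d \<notin> noms b" "open_ty opn (As' ! k)" by auto
      have "d \<noteq> c" using 2(5) c(1) d(1) k by (metis distinct.simps(2) nth_mem)
      then have "d \<notin> noms ?W" using noms_nth_inst[of d "Nom c" b 0] d(3) by auto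
      then show "\<exists>c. ys ! k = Nom c \<and> \<Phi> c = Some (As' ! k) \<and> c \<notin> noms ?W \<and> open_ty opn (As' ! k)"
        using d by auto
    qed
    show "distinct ys" using 2(5) by simp
  qed (use 2 in auto)
  have eq: "close 0 c ?W = b" using close_inst(1) c(3) by blast
  have "has_ty opn csig \<Phi> [A1] b (binds As' B)"
    using ty_close0[OF IH[THEN conjunct1] c(2)] eq by simp
  then have "has_ty opn csig \<Phi> [] (Back b) (TBind A1 (binds As' B))"
    using c(4) by (auto intro: has_ty_rule_ty_pat_ty.t_back)
  moreover have "okt b" using ok_close(1)[OF IH[THEN conjunct2], of 0 c] eq by simp
  ultimately show ?case using As by simp
qed auto

inductive_cases pm_PV: "pmatch T (PV x ys)"
inductive_cases pm_PNom: "pmatch T (PNom t)"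
inductive_cases pm_PPair: "pmatch T (PPair p q)"
inductive_cases pm_PCon: "pmatch T (PCon c ps)"
inductive_cases pm_PBack: "pmatch T (PBack p)"
inductive_cases pt_PV: "pat_ty opn csig \<Phi> \<Gamma> (PV x ys) A"
inductive_cases pt_PNom: "pat_ty opn csig \<Phi> \<Gamma> (PNom t) A"
inductive_cases pt_PPair: "pat_ty opn csig \<Phi> \<Gamma> (PPair p q) A"
inductive_cases pt_PCon: "pat_ty opn csig \<Phi> \<Gamma> (PCon c ps) A"
inductive_cases pt_PBack: "pat_ty opn csig \<Phi> \<Gamma> (PBack p) A"
inductive_cases ht_Var: "has_ty opn csig \<Phi> \<Gamma> (Var i) A"
inductive_cases ht_Nom: "has_ty opn csig \<Phi> \<Gamma> (Nom c) A"
inductive_cases ht_Pair: "has_ty opn csig \<Phi> \<Gamma> (Pair M N) A"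
inductive_cases ht_Con: "has_ty opn csig \<Phi> \<Gamma> (Con c Ms) A"
inductive_cases ht_Back: "has_ty opn csig \<Phi> \<Gamma> (Back M) A"

lemma sb0_var[simp]: "i < length ws \<Longrightarrow> sb 0 ws (Var i) = ws ! i"
  by simp

lemma back_step:
  assumes "has_ty opn csig \<Phi> [] (Back t) (TBind A B)" "okt (Back t)" "d \<notin> noms t"
  shows "has_ty opn csig (\<Phi>(d := Some A)) [] (inst 0 (Nom d) t) B \<and> okt (inst 0 (Nom d) t)"
proof -
  from assms(1) have "has_ty opn csig \<Phi> [A] t B" by (auto elim: ht_Back)
  then have "has_ty opn csig (\<Phi>(d := Some A)) [A] t B" using assms(3) by (auto intro: ty_phi(1))
  moreover have "has_ty opn csig (\<Phi>(d := Some A)) [] (Nom d) A"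
    by (rule has_ty_rule_ty_pat_ty.t_nom) simp
  ultimately have "has_ty opn csig (\<Phi>(d := Some A)) [] (inst 0 (Nom d) t) B"
    using ty_inst(1)[of opn csig "\<Phi>(d := Some A)" "[A]" t B A "[]"] assms(2)
    by auto
  then show ?thesis using assms(2) ok_inst(1)[of "Nom d" t 0] by simp
qed

lemma match_rig: "True" "True"
  "\<And>T \<Phi> \<Gamma> B ws. pmatch T (sb_p 0 ws p) \<Longrightarrow> pat_ty opn csig \<Phi> \<Gamma> p B \<Longrightarrow> has_ty opn csig \<Phi> [] T B
   \<Longrightarrow> okt T \<Longrightarrow> length ws = length \<Gamma> \<Longrightarrow> list_all (lc 0) ws \<Longrightarrow> i < length \<Gamma> \<Longrightarrow> rig i p
   \<Longrightarrow> \<exists>c. ws ! i = Nom c \<and> \<Phi> c = Some (\<Gamma> ! i)"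
proof (induction "x::tm" and "y::rule" and p arbitrary: and and i)
  case (PNom X)
  then have X: "X = Var i" by simp
  with PNom.prems obtain c where c: "ws ! i = Nom c" "T = Nom c" by (auto elim: pm_PNom)
  from PNom.prems(2) X have "has_ty opn csig \<Phi> \<Gamma> (Var i) B" by (auto elim: pt_PNom)
  then have "B = \<Gamma> ! i" by (auto elim: ht_Var)
  moreover from PNom.prems(3) c have "\<Phi> c = Some B" by (auto elim: ht_Nom)
  ultimately show ?case using c by auto
next
  case (PPair p q)
  from PPair.prems(1) obtain T1 T2 where T: "T = Pair T1 T2" "pmatch T1 (sb_p 0 ws p)" "pmatch T2 (sb_p 0 ws q)"
    by (auto elim: pm_PPair)
  from PPair.prems(2) obtain B1 B2 where B: "B = TProd B1 B2" "pat_ty opn csig \<Phi> \<Gamma> p B1" "pat_ty opn csig \<Phi> \<Gamma> q B2"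
    by (auto elim: pt_PPair)
  from PPair.prems(3) T B have h: "has_ty opn csig \<Phi> [] T1 B1" "has_ty opn csig \<Phi> [] T2 B2" by (auto elim: ht_Pair)
  show ?case
  proof (cases "rig i p")
    case True
    then show ?thesis using PPair.IH(1)[OF T(2) B(2) h(1)] PPair.prems T by auto
  next
    case False
    then have "rig i q" using PPair.prems by simp
    then show ?thesis using PPair.IH(2)[OF T(3) B(3) h(2)] PPair.prems T by auto
  qed
next
  case (PCon c ps)
  from PCon.prems(1) obtain Ts where T: "T = Con c Ts" "list_all2 pmatch Ts (map (sb_p 0 ws) ps)"
    by (auto elim: pm_PCon)
  from PCon.prems(2) obtain As b where B: "csig c = Some (As, b)" "B = TPrim b" "list_all2 (pat_ty opn csig \<Phi> \<Gamma>) ps As"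
    by (auto elim: pt_PCon)
  from PCon.prems(3) T B have h: "list_all2 (has_ty opn csig \<Phi> []) Ts As" by (auto elim: ht_Con)
  from PCon.prems(8) obtain k where k: "k < length ps" "rig i (ps ! k)" by (auto simp: in_set_conv_nth)
  have lens: "length Ts = length ps" "length As = length ps" using T(2) B(3) by (auto dest: list_all2_lengthD)
  show ?case
  proof (rule PCon.IH)
    show "ps ! k \<in> set ps" using k by simp
    show "pmatch (Ts ! k) (sb_p 0 ws (ps ! k))" using T(2) k lens by (auto simp: list_all2_conv_all_nth)
    show "pat_ty opn csig \<Phi> \<Gamma> (ps ! k) (As ! k)" using B(3) k by (auto simp: list_all2_conv_all_nth)
    show "has_ty opn csig \<Phi> [] (Ts ! k) (As ! k)" using h k lens by (auto simp: list_all2_conv_all_nth)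
    show "okt (Ts ! k)" using PCon.prems(4) T k lens by (auto simp: list_all_iff)
  qed (use PCon.prems k in auto)
next
  case (PBack p)
  from PBack.prems(1) obtain t d where T: "T = Back t" "d \<notin> noms t \<union> noms_p (sb_p (Suc 0) ws p)"
    "pmatch (inst 0 (Nom d) t) (inst_p 0 (Nom d) (sb_p (Suc 0) ws p))"
    by (auto elim: pm_PBack)
  from PBack.prems(2) obtain A B' where B: "B = TBind A B'" "open_ty opn A" "pat_ty opn csig \<Phi> (A # \<Gamma>) p B'"
    by (auto elim: pt_PBack)
  let ?\<Phi> = "\<Phi>(d := Some A)"
  have st: "has_ty opn csig ?\<Phi> [] (inst 0 (Nom d) t) B' \<and> okt (inst 0 (Nom d) t)"
    using back_step[of opn csig \<Phi> t A B' d] PBack.prems T B by auto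
  have eq: "inst_p 0 (Nom d) (sb_p (Suc 0) ws p) = sb_p 0 (Nom d # ws) p"
    using inst_sb(3) PBack.prems(6) by auto
  have dp: "d \<notin> noms_p p" using T(2) noms_sb(3)[of p "Suc 0" ws] by auto
  have pt: "pat_ty opn csig ?\<Phi> (A # \<Gamma>) p B'" using ty_phi(3)[OF B(3)] dp by auto
  have IH: "\<exists>c. (Nom d # ws) ! Suc i = Nom c \<and> ?\<Phi> c = Some ((A # \<Gamma>) ! Suc i)"
    by (rule PBack.IH[OF T(3)[unfolded eq] pt st[THEN conjunct1] st[THEN conjunct2]]) (use PBack.prems in auto)
  then obtain c where c: "ws ! i = Nom c" "?\<Phi> c = Some (\<Gamma> ! i)" by auto
  have "noms (ws ! (Suc i - Suc 0)) \<subseteq> noms_p (sb_p (Suc 0) ws p)"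
    using occ_rig(3)[of "Suc i" p "Suc 0" ws] PBack.prems by auto
  then have "c \<noteq> d" using T(2) c(1) by auto
  then show ?case using c by auto
qed auto

lemma pvc_con: "q \<in> set ps \<Longrightarrow> pvc i q \<noteq> 0 \<Longrightarrow> pvc i (PCon c ps) \<noteq> 0"
  by auto

definition H1 where "H1 \<Phi> \<Gamma> K ws p \<longleftrightarrow>
  (\<forall>j\<in>used p. j < length \<Gamma> \<longrightarrow> K ! j \<noteq> KAll \<longrightarrow> (\<exists>c. ws ! j = Nom c \<and> \<Phi> c = Some (\<Gamma> ! j)))"
definition H2 where "H2 \<Gamma> K ws p \<longleftrightarrow>
  (\<forall>i\<in>used p. \<forall>j\<in>used p. i < length \<Gamma> \<longrightarrow> j < length \<Gamma> \<longrightarrow> K ! i \<noteq> KAll \<longrightarrow> K ! j \<noteq> KAll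
     \<longrightarrow> i \<noteq> j \<longrightarrow> ws ! i \<noteq> ws ! j)"
definition H3 where "H3 \<Gamma> K ws p \<longleftrightarrow>
  (\<forall>i<length \<Gamma>. \<forall>j\<in>used p. K ! i = KAll \<longrightarrow> pvc i p \<noteq> 0 \<longrightarrow> j < length \<Gamma> \<longrightarrow> K ! j \<noteq> KAll
     \<longrightarrow> (\<forall>c. ws ! j = Nom c \<longrightarrow> c \<notin> noms (ws ! i)))"

lemma H_sub:
  assumes "used q \<subseteq> used p" "\<And>i. pvc i q \<noteq> 0 \<Longrightarrow> pvc i p \<noteq> 0"
  shows "H1 \<Phi> \<Gamma> K ws p \<Longrightarrow> H1 \<Phi> \<Gamma> K ws q" "H2 \<Gamma> K ws p \<Longrightarrow> H2 \<Gamma> K ws q" "H3 \<Gamma> K ws p \<Longrightarrow> H3 \<Gamma> K ws q"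
  using assms unfolding H1_def H2_def H3_def by blast+




lemma match_all: "True" "True"
  "\<And>T \<Phi> \<Gamma> B ws K. pmatch T (sb_p 0 ws p) \<Longrightarrow> pat_ty opn csig \<Phi> \<Gamma> p B \<Longrightarrow> has_ty opn csig \<Phi> [] T B
   \<Longrightarrow> okt T \<Longrightarrow> length ws = length \<Gamma> \<Longrightarrow> length K = length \<Gamma> \<Longrightarrow> list_all (lc 0) ws \<Longrightarrow> okp K p
   \<Longrightarrow> H1 \<Phi> \<Gamma> K ws p \<Longrightarrow> H2 \<Gamma> K ws p \<Longrightarrow> H3 \<Gamma> K ws p
   \<Longrightarrow> i < length \<Gamma> \<Longrightarrow> K ! i = KAll \<Longrightarrow> pvc i p \<noteq> 0
   \<Longrightarrow> has_ty opn csig \<Phi> [] (ws ! i) (\<Gamma> ! i) \<and> okt (ws ! i)"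
proof (induction "x::tm" and "y::rule" and p arbitrary: and and i)
  case (PV x ys)
  from PV.prems(8) obtain i0 js where o: "x = Var i0" "i0 < length K" "K ! i0 = KAll" "ys = map Var js"
    "distinct js" "\<forall>j\<in>set js. j < i0 \<and> K ! j \<noteq> KAll" by auto
  have ii: "i = i0" using PV.prems(14) o(1) by (simp split: if_splits)
  have jl: "\<forall>j\<in>set js. j < length ws" using o PV.prems(5,6) by auto
  have i0l: "i0 < length ws" using o(2) PV.prems(5,6) by simp
  have mp: "map (sb 0 ws) (map Var js) = map (\<lambda>j. ws ! j) js"
    using jl by simp
  have sbe: "sb_p 0 ws (PV x ys) = PV (ws ! i0) (map (\<lambda>j. ws ! j) js)"
    using o(1,4) mp i0l by simp
  from PV.prems(1) sbe have ib: "inst_backs (ws ! i0) (map (\<lambda>j. ws ! j) js) = Some T"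
    by (auto elim: pm_PV)
  from PV.prems(2) o obtain As where As: "\<Gamma> ! i0 = binds As B"
    "list_all2 (\<lambda>Y B. has_ty opn csig \<Phi> \<Gamma> Y B \<and> open_ty opn B) (map Var js) As"
    by (auto elim: pt_PV)
  have lenA: "length As = length js" using As(2) by (auto dest: list_all2_lengthD)
  have Ak: "\<And>k. k < length js \<Longrightarrow> As ! k = \<Gamma> ! (js ! k) \<and> open_ty opn (As ! k)"
  proof -
    fix k assume k: "k < length js"
    then have "has_ty opn csig \<Phi> \<Gamma> (Var (js ! k)) (As ! k) \<and> open_ty opn (As ! k)"
      using As(2) by (auto simp: list_all2_conv_all_nth)
    then show "As ! k = \<Gamma> ! (js ! k) \<and> open_ty opn (As ! k)" by (auto elim: ht_Var)
  qed
  have usedp: "used (PV x ys) = set js" using o by auto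
  have pvc0: "pvc i0 (PV x ys) \<noteq> 0" using o by simp
  have res: "has_ty opn csig \<Phi> [] (ws ! i0) (binds As B) \<and> okt (ws ! i0)"
  proof (rule inst_backs_ty[OF ib])
    show "length (map (\<lambda>j. ws ! j) js) = length As" using lenA by simp
    show "\<forall>k<length (map (\<lambda>j. ws ! j) js). \<exists>c. map (\<lambda>j. ws ! j) js ! k = Nom c \<and> \<Phi> c = Some (As ! k)
           \<and> c \<notin> noms (ws ! i0) \<and> open_ty opn (As ! k)"
    proof (intro allI impI)
      fix k assume k: "k < length (map (\<lambda>j. ws ! j) js)"
      then have k': "k < length js" by simp
      have jin: "js ! k \<in> used (PV x ys)" using usedp k' by simp
      have jm: "js ! k \<in> set js" using k' by simp
      have jlt: "js ! k < length \<Gamma>" "K ! (js ! k) \<noteq> KAll" using o(2) o(6) jm PV.prems(6) by auto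
      obtain c where c: "ws ! (js ! k) = Nom c" "\<Phi> c = Some (\<Gamma> ! (js ! k))"
        using PV.prems(9)[unfolded H1_def, rule_format, OF jin jlt(1) jlt(2)] by blast
      have i0G: "i0 < length \<Gamma>" using o(2) PV.prems(6) by simp
      have "c \<notin> noms (ws ! i0)"
        using PV.prems(11)[unfolded H3_def, rule_format, OF i0G jin o(3) pvc0 jlt(1) jlt(2) c(1)] .
      then show "\<exists>c. map (\<lambda>j. ws ! j) js ! k = Nom c \<and> \<Phi> c = Some (As ! k)
           \<and> c \<notin> noms (ws ! i0) \<and> open_ty opn (As ! k)"
        using c Ak[OF k'] k' by auto
    qed
    show "distinct (map (\<lambda>j. ws ! j) js)"
    proof (rule distinct_map[THEN iffD2], rule conjI)
      show "distinct js" by (rule o(5))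
      show "inj_on (\<lambda>j. ws ! j) (set js)"
      proof (rule inj_onI)
        fix a b assume ab: "a \<in> set js" "b \<in> set js" "ws ! a = ws ! b"
        show "a = b"
        proof (rule ccontr)
          assume "a \<noteq> b"
          moreover have "a < length \<Gamma>" "b < length \<Gamma>" "K ! a \<noteq> KAll" "K ! b \<noteq> KAll"
            using ab o PV.prems(6) by auto
          moreover have "a \<in> used (PV x ys)" "b \<in> used (PV x ys)" using ab usedp by auto
          ultimately show False using PV.prems(10)[unfolded H2_def] ab(3) by blast
        qed
      qed
    qed
    show "has_ty opn csig \<Phi> [] T B" by (rule PV.prems(3))
    show "okt T" by (rule PV.prems(4))
  qed
  then show ?case using ii As(1) by simp
next
  case (PPair p q)
  from PPair.prems(1) obtain T1 T2 where T: "T = Pair T1 T2" "pmatch T1 (sb_p 0 ws p)" "pmatch T2 (sb_p 0 ws q)"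
    by (auto elim: pm_PPair)
  from PPair.prems(2) obtain B1 B2 where B: "B = TProd B1 B2" "pat_ty opn csig \<Phi> \<Gamma> p B1" "pat_ty opn csig \<Phi> \<Gamma> q B2"
    by (auto elim: pt_PPair)
  from PPair.prems(3) T B have h: "has_ty opn csig \<Phi> [] T1 B1" "has_ty opn csig \<Phi> [] T2 B2" by (auto elim: ht_Pair)
  have subp: "used p \<subseteq> used (PPair p q)" "\<And>i. pvc i p \<noteq> 0 \<Longrightarrow> pvc i (PPair p q) \<noteq> 0" by auto
  have subq: "used q \<subseteq> used (PPair p q)" "\<And>i. pvc i q \<noteq> 0 \<Longrightarrow> pvc i (PPair p q) \<noteq> 0" by auto
  show ?case
  proof (cases "pvc i p \<noteq> 0")
    case True
    show ?thesis
      by (rule PPair.IH(1)[OF T(2) B(2) h(1)])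
         (use PPair.prems T True H_sub[OF subp] in auto)
  next
    case False
    then have "pvc i q \<noteq> 0" using PPair.prems(14) by simp
    show ?thesis
      by (rule PPair.IH(2)[OF T(3) B(3) h(2)])
         (use PPair.prems T \<open>pvc i q \<noteq> 0\<close> H_sub[OF subq] in auto)
  qed
next
  case (PCon c ps)
  from PCon.prems(1) obtain Ts where T: "T = Con c Ts" "list_all2 pmatch Ts (map (sb_p 0 ws) ps)"
    by (auto elim: pm_PCon)
  from PCon.prems(2) obtain As b where B: "csig c = Some (As, b)" "B = TPrim b" "list_all2 (pat_ty opn csig \<Phi> \<Gamma>) ps As"
    by (auto elim: pt_PCon)
  from PCon.prems(3) T B have h: "list_all2 (has_ty opn csig \<Phi> []) Ts As" by (auto elim: ht_Con)
  from PCon.prems(14) obtain k where k: "k < length ps" "pvc i (ps ! k) \<noteq> 0"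
    by (auto simp: in_set_conv_nth sum_list_eq_0_iff)
  have lens: "length Ts = length ps" "length As = length ps" using T(2) B(3) by (auto dest: list_all2_lengthD)
  have qin: "ps ! k \<in> set ps" using k by simp
  have sub: "used (ps ! k) \<subseteq> used (PCon c ps)" "\<And>i. pvc i (ps ! k) \<noteq> 0 \<Longrightarrow> pvc i (PCon c ps) \<noteq> 0"
    using qin pvc_con by auto
  show ?case
  proof (rule PCon.IH[OF qin])
    show "pmatch (Ts ! k) (sb_p 0 ws (ps ! k))" using T(2) k lens by (auto simp: list_all2_conv_all_nth)
    show "pat_ty opn csig \<Phi> \<Gamma> (ps ! k) (As ! k)" using B(3) k by (auto simp: list_all2_conv_all_nth)
    show "has_ty opn csig \<Phi> [] (Ts ! k) (As ! k)" using h k lens by (auto simp: list_all2_conv_all_nth)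
    show "okt (Ts ! k)" using PCon.prems(4) T k lens by (auto simp: list_all_iff)
    show "okp K (ps ! k)" using PCon.prems(8) qin by (auto simp: list_all_iff)
  qed (use PCon.prems k H_sub[OF sub] in auto)
next
  case (PBack p)
  from PBack.prems(1) obtain t d where T: "T = Back t" "d \<notin> noms t \<union> noms_p (sb_p (Suc 0) ws p)"
    "pmatch (inst 0 (Nom d) t) (inst_p 0 (Nom d) (sb_p (Suc 0) ws p))"
    by (auto elim: pm_PBack)
  from PBack.prems(2) obtain A B' where B: "B = TBind A B'" "open_ty opn A" "pat_ty opn csig \<Phi> (A # \<Gamma>) p B'"
    by (auto elim: pt_PBack)
  let ?\<Phi> = "\<Phi>(d := Some A)"
  have st: "has_ty opn csig ?\<Phi> [] (inst 0 (Nom d) t) B' \<and> okt (inst 0 (Nom d) t)"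
    using back_step[of opn csig \<Phi> t A B' d] PBack.prems T B by auto
  have eq: "inst_p 0 (Nom d) (sb_p (Suc 0) ws p) = sb_p 0 (Nom d # ws) p"
    using inst_sb(3) PBack.prems(7) by auto
  have dp: "d \<notin> noms_p p" using T(2) noms_sb(3)[of p "Suc 0" ws] by auto
  have pt: "pat_ty opn csig ?\<Phi> (A # \<Gamma>) p B'" using ty_phi(3)[OF B(3)] dp by auto
  have occu: "\<And>j. j \<in> used (PBack p) \<Longrightarrow> j < length ws \<Longrightarrow> d \<notin> noms (ws ! j)"
  proof -
    fix j assume "j \<in> used (PBack p)" "j < length ws"
    then have "noms (ws ! (Suc j - Suc 0)) \<subseteq> noms_p (sb_p (Suc 0) ws p)"
      using occ_used(3)[of "Suc j" p "Suc 0" ws] by auto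
    then show "d \<notin> noms (ws ! j)" using T(2) by auto
  qed
  have occp: "\<And>j. pvc (Suc j) p \<noteq> 0 \<Longrightarrow> j < length ws \<Longrightarrow> d \<notin> noms (ws ! j)"
  proof -
    fix j assume "pvc (Suc j) p \<noteq> 0" "j < length ws"
    then have "noms (ws ! (Suc j - Suc 0)) \<subseteq> noms_p (sb_p (Suc 0) ws p)"
      using occ_pvc(3)[of "Suc j" p "Suc 0" ws] by auto
    then show "d \<notin> noms (ws ! j)" using T(2) by auto
  qed
  have h1: "H1 ?\<Phi> (A # \<Gamma>) (KPB # K) (Nom d # ws) p"
    unfolding H1_def
  proof (intro ballI impI)
    fix j assume j: "j \<in> used p" "j < length (A # \<Gamma>)" "(KPB # K) ! j \<noteq> KAll"
    show "\<exists>c. (Nom d # ws) ! j = Nom c \<and> ?\<Phi> c = Some ((A # \<Gamma>) ! j)"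
    proof (cases j)
      case 0
      then show ?thesis by simp
    next
      case (Suc j')
      then have j': "j' \<in> used (PBack p)" "j' < length \<Gamma>" "K ! j' \<noteq> KAll" using j by auto
      then obtain c where c: "ws ! j' = Nom c" "\<Phi> c = Some (\<Gamma> ! j')"
        using PBack.prems(9)[unfolded H1_def, rule_format, OF j'(1) j'(2) j'(3)] by blast
      have "c \<noteq> d" using occu[OF j'(1)] j'(2) PBack.prems(5) c(1) by auto
      then show ?thesis using c Suc by auto
    qed
  qed
  have h2: "H2 (A # \<Gamma>) (KPB # K) (Nom d # ws) p"
    unfolding H2_def
  proof (intro ballI impI)
    fix a b assume ab: "a \<in> used p" "b \<in> used p" "a < length (A # \<Gamma>)" "b < length (A # \<Gamma>)"
      "(KPB # K) ! a \<noteq> KAll" "(KPB # K) ! b \<noteq> KAll" "a \<noteq> b"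
    have nd: "\<And>j'. Suc j' \<in> used p \<Longrightarrow> j' < length \<Gamma> \<Longrightarrow> K ! j' \<noteq> KAll \<Longrightarrow> ws ! j' \<noteq> Nom d"
    proof -
      fix j' assume "Suc j' \<in> used p" "j' < length \<Gamma>" "K ! j' \<noteq> KAll"
      then have j': "j' \<in> used (PBack p)" by auto
      obtain c where c: "ws ! j' = Nom c"
        using PBack.prems(9)[unfolded H1_def, rule_format, OF j' \<open>j' < length \<Gamma>\<close> \<open>K ! j' \<noteq> KAll\<close>] by blast
      have "d \<notin> noms (ws ! j')" using occu[OF j'] \<open>j' < length \<Gamma>\<close> PBack.prems(5) by auto
      then show "ws ! j' \<noteq> Nom d" by auto
    qed
    show "(Nom d # ws) ! a \<noteq> (Nom d # ws) ! b"
    proof (cases a)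
      case 0
      then obtain b' where "b = Suc b'" using ab by (cases b) auto
      then show ?thesis using 0 nd[of b'] ab by auto
    next
      case (Suc a')
      show ?thesis
      proof (cases b)
        case 0
        then show ?thesis using Suc nd[of a'] ab by auto
      next
        case (Suc b')
        have x: "a' \<in> used (PBack p)" "b' \<in> used (PBack p)" "a' < length \<Gamma>" "b' < length \<Gamma>"
          "K ! a' \<noteq> KAll" "K ! b' \<noteq> KAll" "a' \<noteq> b'"
          using Suc \<open>a = Suc a'\<close> ab by auto
        have "ws ! a' \<noteq> ws ! b'"
          using PBack.prems(10)[unfolded H2_def, rule_format, OF x(1) x(2) x(3) x(4) x(5) x(6) x(7)] .
        then show ?thesis using Suc \<open>a = Suc a'\<close> by simp
      qed
    qed
  qed
  have h3: "H3 (A # \<Gamma>) (KPB # K) (Nom d # ws) p"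
    unfolding H3_def
  proof (intro allI impI ballI)
    fix a b c assume ab: "a < length (A # \<Gamma>)" "b \<in> used p" "(KPB # K) ! a = KAll" "pvc a p \<noteq> 0"
      "b < length (A # \<Gamma>)" "(KPB # K) ! b \<noteq> KAll" "(Nom d # ws) ! b = Nom c"
    obtain a' where a': "a = Suc a'" using ab(3) by (cases a) auto
    show "c \<notin> noms ((Nom d # ws) ! a)"
    proof (cases b)
      case 0
      then have "c = d" using ab by simp
      then show ?thesis using occp[of a'] a' ab PBack.prems(5) by auto
    next
      case (Suc b')
      have x: "a' < length \<Gamma>" "b' \<in> used (PBack p)" "K ! a' = KAll" "pvc a' (PBack p) \<noteq> 0"
        "b' < length \<Gamma>" "K ! b' \<noteq> KAll" "ws ! b' = Nom c"
        using Suc a' ab by auto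
      show ?thesis
        using PBack.prems(11)[unfolded H3_def, rule_format, OF x(1) x(2) x(3) x(4) x(5) x(6) x(7)] a' by simp
    qed
  qed
  obtain i' where i': "i = i'" by simp
  have IH: "has_ty opn csig ?\<Phi> [] ((Nom d # ws) ! Suc i) ((A # \<Gamma>) ! Suc i) \<and> okt ((Nom d # ws) ! Suc i)"
    by (rule PBack.IH[OF T(3)[unfolded eq] pt st[THEN conjunct1] st[THEN conjunct2] _ _ _ _ h1 h2 h3])
       (use PBack.prems in auto)
  have "d \<notin> noms (ws ! i)" using occp[of i] PBack.prems by auto
  then have "has_ty opn csig \<Phi> [] (ws ! i) (\<Gamma> ! i)"
    using ty_phi(1)[of opn csig ?\<Phi> "[]" "ws ! i" "\<Gamma> ! i" \<Phi>] IH by auto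
  then show ?case using IH by simp
qed auto




lemma sb_nabs: "sb_r k ws ((RNab ^^ m) X) = (RNab ^^ m) (sb_r (k + m) ws X)"
  by (induction m arbitrary: k) auto

lemma inst_nabs: "lc 0 s \<Longrightarrow> inst_r k s ((RNab ^^ m) X) = (RNab ^^ m) (inst_r (k + m) s X)"
  by (induction m arbitrary: k) auto

lemma noms_nabs[simp]: "noms_r ((RNab ^^ m) X) = noms_r X"
  by (induction m) auto

lemma sb_nabs_inv: "sb_r k ws R0 = (RNab ^^ m) (RArr p u) \<Longrightarrow>
  \<exists>p0 u0. R0 = (RNab ^^ m) (RArr p0 u0) \<and> p = sb_p (k + m) ws p0 \<and> u = sb (k + m) ws u0"
proof (induction m arbitrary: k R0)
  case 0
  then show ?case by (cases R0) auto
next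
  case (Suc m)
  then show ?case
  proof (cases R0)
    case (RNab R1)
    then have "sb_r (Suc k) ws R1 = (RNab ^^ m) (RArr p u)" using Suc.prems by simp
    from Suc.IH[OF this] obtain p0 u0 where "R1 = (RNab ^^ m) (RArr p0 u0)" "p = sb_p (Suc k + m) ws p0"
      "u = sb (Suc k + m) ws u0" by blast
    then show ?thesis using RNab by auto
  qed (use Suc.prems in auto)
qed

inductive_cases rt_RAll: "rule_ty opn csig \<Phi> \<Gamma> B (RAll R) A"
inductive_cases rt_RNab: "rule_ty opn csig \<Phi> \<Gamma> B (RNab R) A"
inductive_cases rt_RArr: "rule_ty opn csig \<Phi> \<Gamma> B (RArr p u) A"

lemma ty_nabs: "rule_ty opn csig \<Phi> \<Gamma> B ((RNab ^^ m) (RArr p0 u0)) A \<Longrightarrow>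
  \<exists>Ds. length Ds = m \<and> pat_ty opn csig \<Phi> (Ds @ \<Gamma>) p0 B \<and> has_ty opn csig \<Phi> (Ds @ \<Gamma>) u0 A"
proof (induction m arbitrary: \<Gamma>)
  case 0
  then show ?case by (auto elim: rt_RArr)
next
  case (Suc m)
  from Suc.prems obtain C where "rule_ty opn csig \<Phi> (C # \<Gamma>) B ((RNab ^^ m) (RArr p0 u0)) A"
    by (auto elim: rt_RNab)
  from Suc.IH[OF this] obtain Ds where "length Ds = m" "pat_ty opn csig \<Phi> (Ds @ C # \<Gamma>) p0 B"
    "has_ty opn csig \<Phi> (Ds @ C # \<Gamma>) u0 A" by blast
  then show ?case by (intro exI[of _ "Ds @ [C]"]) auto
qed

lemma ok_nabs: "okr K ((RNab ^^ m) X) \<Longrightarrow> okr (replicate m KNab @ K) X"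
proof (induction m arbitrary: K)
  case (Suc m)
  then have "okr (replicate m KNab @ KNab # K) X" by simp
  then show ?case by (simp add: replicate_app_Cons_same)
qed simp

lemma open_nabs_sb: "list_all (lc 0) ws \<Longrightarrow>
  open_nabs cs ((RNab ^^ length cs) (RArr (sb_p (length cs) ws p0) (sb (length cs) ws u0)))
  = RArr (sb_p 0 (rev (map Nom cs) @ ws) p0) (sb 0 (rev (map Nom cs) @ ws) u0)"
proof (induction cs arbitrary: ws)
  case Nil
  then show ?case by simp
next
  case (Cons c cs)
  let ?n = "length cs"
  have "inst_r 0 (Nom c) ((RNab ^^ ?n) (RArr (sb_p (Suc ?n) ws p0) (sb (Suc ?n) ws u0)))
     = (RNab ^^ ?n) (RArr (sb_p ?n (Nom c # ws) p0) (sb ?n (Nom c # ws) u0))"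
    using Cons.prems by (simp add: inst_nabs inst_sb)
  moreover have "list_all (lc 0) (Nom c # ws)" using Cons.prems by simp
  ultimately show ?case using Cons.IH[of "Nom c # ws"] by simp
qed

lemma ty_weak_closed: "has_ty opn csig \<Phi> [] w C \<Longrightarrow> lc 0 w \<Longrightarrow> has_ty opn csig \<Phi> \<Delta> w C"
proof (induction \<Delta>)
  case (Cons D \<Delta>)
  then show ?case using ty_lift0[of opn csig \<Phi> \<Delta> w C D] by simp
qed simp

lemma sb_cons: "list_all (lc 0) ws \<Longrightarrow> lc 0 w \<Longrightarrow> sb k (w # ws) u = inst k w (sb (Suc k) ws u)"
  using inst_sb(1) by simp

lemma ok_sb: "list_all (lc 0) ws \<Longrightarrow> list_all okt ws \<Longrightarrow> okt u \<Longrightarrow> okt (sb k ws u)"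
proof (induction ws arbitrary: k)
  case (Cons w ws)
  then show ?case using sb_cons[of ws w k u] ok_inst(1) by simp
qed simp

lemma ty_sb: "has_ty opn csig \<Phi> (\<Delta> @ \<Gamma>) u A \<Longrightarrow> length ws = length \<Gamma>
  \<Longrightarrow> (\<forall>i<length \<Gamma>. has_ty opn csig \<Phi> [] (ws ! i) (\<Gamma> ! i)) \<Longrightarrow> okt u \<Longrightarrow> list_all (lc 0) ws
  \<Longrightarrow> list_all okt ws \<Longrightarrow> has_ty opn csig \<Phi> \<Delta> (sb (length \<Delta>) ws u) A"
proof (induction ws arbitrary: \<Delta> \<Gamma>)
  case Nil
  then show ?case by simp
next
  case (Cons w ws)
  then obtain C \<Gamma>' where G: "\<Gamma> = C # \<Gamma>'" by (cases \<Gamma>) auto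
  have IH: "has_ty opn csig \<Phi> (\<Delta> @ [C]) (sb (length (\<Delta> @ [C])) ws u) A"
  proof (rule Cons.IH)
    show "has_ty opn csig \<Phi> ((\<Delta> @ [C]) @ \<Gamma>') u A" using Cons.prems(1) G by simp
    show "\<forall>i<length \<Gamma>'. has_ty opn csig \<Phi> [] (ws ! i) (\<Gamma>' ! i)"
      using Cons.prems(3) G by (metis Suc_mono length_Cons nth_Cons_Suc)
  qed (use Cons.prems G in auto)
  have w: "has_ty opn csig \<Phi> [] w C" using Cons.prems(3) G by (metis length_Cons nth_Cons_0 zero_less_Suc)
  have wl: "lc 0 w" using Cons.prems(5) by simp
  have wD: "has_ty opn csig \<Phi> (\<Delta> @ []) w C" using ty_weak_closed[OF w wl] by simp
  have oks: "okt (sb (Suc (length \<Delta>)) ws u)" using ok_sb Cons.prems by simp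
  have "has_ty opn csig \<Phi> (\<Delta> @ []) (inst (length \<Delta>) w (sb (Suc (length \<Delta>)) ws u)) A"
    using ty_inst(1)[of opn csig \<Phi> "\<Delta> @ [C]" "sb (Suc (length \<Delta>)) ws u" A C "[]"] IH oks wD by simp
  then show ?case using sb_cons[of ws w "length \<Delta>" u] Cons.prems(5) by simp
qed



lemma clause_pres:
  assumes "clause T R U"
  shows "\<And>xs \<Gamma> K R0. R = sb_r 0 xs R0 \<Longrightarrow> rule_ty opn csig \<Phi> \<Gamma> B R0 A \<Longrightarrow> okr K R0
    \<Longrightarrow> length K = length \<Gamma> \<Longrightarrow> length xs = length \<Gamma> \<Longrightarrow> set K \<subseteq> {KAll} \<Longrightarrow> list_all (lc 0) xs
    \<Longrightarrow> has_ty opn csig \<Phi> [] T B \<Longrightarrow> okt T \<Longrightarrow> has_ty opn csig \<Phi> [] U A \<and> okt U"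
  using assms
proof (induction rule: clause.induct)
  case (c_all x T R U)
  from c_all.prems(1) obtain R1 where R0: "R0 = RAll R1" "R = sb_r (Suc 0) xs R1"
    by (cases R0) auto
  from c_all.prems(2) R0 obtain C where ty: "rule_ty opn csig \<Phi> (C # \<Gamma>) B R1 A"
    by (auto elim: rt_RAll)
  have eq: "inst_r 0 x R = sb_r 0 (x # xs) R1" using R0(2) inst_sb(2) c_all.prems(7) c_all.hyps(1) by simp
  show ?case
    by (rule c_all.IH[OF eq ty, of "KAll # K"]) (use c_all.prems c_all.hyps R0 in auto)
next
  case (c_nab cs m p u P U T)
  from sb_nabs_inv[OF c_nab.prems(1)[symmetric]] obtain p0 u0 where
    R0: "R0 = (RNab ^^ m) (RArr p0 u0)" "p = sb_p m xs p0" "u = sb m xs u0" by auto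
  let ?ws = "rev (map Nom cs) @ xs"
  have PU: "P = sb_p 0 ?ws p0" "U = sb 0 ?ws u0"
    using c_nab.hyps(4) open_nabs_sb[OF c_nab.prems(7), of cs p0 u0] R0 c_nab.hyps(1) by auto
  from ty_nabs[of opn csig \<Phi> \<Gamma> B m p0 u0 A] c_nab.prems(2) R0 obtain Ds where
    Ds: "length Ds = m" "pat_ty opn csig \<Phi> (Ds @ \<Gamma>) p0 B" "has_ty opn csig \<Phi> (Ds @ \<Gamma>) u0 A" by auto
  let ?G = "Ds @ \<Gamma>" and ?KF = "replicate m KNab @ K"
  have ok: "okr ?KF (RArr p0 u0)" using ok_nabs[of K m "RArr p0 u0"] c_nab.prems(3) R0(1) by blast
  then have okp: "okp ?KF p0" and oku: "okt u0"
    and conds: "\<forall>i<length ?KF. (?KF ! i = KAll \<longrightarrow> pvc i p0 = 1) \<and> (?KF ! i = KNab \<longrightarrow> rig i p0)"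
    unfolding okr.simps by blast+
  have lws: "length ?ws = length ?G" using Ds c_nab.hyps(1) c_nab.prems(5) by simp
  have lKF: "length ?KF = length ?G" using Ds c_nab.prems(4) by simp
  have lcws: "list_all (lc 0) ?ws" using c_nab.prems(7) by (auto simp: list_all_iff)
  have KFlo: "\<And>i. i < m \<Longrightarrow> ?KF ! i = KNab" by (simp add: nth_append)
  have KFhi: "\<And>i. m \<le> i \<Longrightarrow> i < length ?G \<Longrightarrow> ?KF ! i = KAll"
  proof -
    fix i assume "m \<le> i" "i < length ?G"
    then have "?KF ! i = K ! (i - m)" "i - m < length K" using Ds c_nab.prems(4) by (auto simp: nth_append)
    then show "?KF ! i = KAll" using c_nab.prems(6) nth_mem by fastforce
  qed
  have wslo: "\<And>i. i < m \<Longrightarrow> ?ws ! i = Nom (rev cs ! i)"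
    using c_nab.hyps(1) by (simp add: nth_append rev_map)
  have wshi: "\<And>i. m \<le> i \<Longrightarrow> ?ws ! i = xs ! (i - m)"
    using c_nab.hyps(1) by (simp add: nth_append)
  have pm: "pmatch T (sb_p 0 ?ws p0)" using c_nab.hyps(5) PU by simp
  have nab: "\<And>i. i < m \<Longrightarrow> \<exists>c. ?ws ! i = Nom c \<and> \<Phi> c = Some (?G ! i)"
  proof -
    fix i assume i: "i < m"
    then have "rig i p0" using conds KFlo[OF i] Ds lKF by auto
    then show "\<exists>c. ?ws ! i = Nom c \<and> \<Phi> c = Some (?G ! i)"
      using match_rig(3)[OF pm Ds(2) c_nab.prems(8) c_nab.prems(9) lws lcws] i Ds by auto
  qed
  have nonall: "\<And>j. j < length ?G \<Longrightarrow> ?KF ! j \<noteq> KAll \<Longrightarrow> j < m"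
    using KFhi by (meson not_le)
  have h1: "H1 \<Phi> ?G ?KF ?ws p0" unfolding H1_def using nab nonall by blast
  have h2: "H2 ?G ?KF ?ws p0" unfolding H2_def
  proof (intro ballI impI)
    fix i j assume ij: "i \<in> used p0" "j \<in> used p0" "i < length ?G" "j < length ?G" "?KF ! i \<noteq> KAll"
      "?KF ! j \<noteq> KAll" "i \<noteq> j"
    then have "i < m" "j < m" using nonall by auto
    moreover have "distinct (rev cs)" using c_nab.hyps(2) by simp
    ultimately have "rev cs ! i \<noteq> rev cs ! j" using ij(7) c_nab.hyps(1) by (simp add: nth_eq_iff_index_eq)
    then show "?ws ! i \<noteq> ?ws ! j" using wslo \<open>i < m\<close> \<open>j < m\<close> by simp
  qed
  have h3: "H3 ?G ?KF ?ws p0" unfolding H3_def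
  proof (intro allI impI ballI)
    fix i j c assume ij: "i < length ?G" "j \<in> used p0" "?KF ! i = KAll" "pvc i p0 \<noteq> 0" "j < length ?G"
      "?KF ! j \<noteq> KAll" "?ws ! j = Nom c"
    have jm: "j < m" using nonall ij by auto
    have im: "m \<le> i"
    proof (rule ccontr)
      assume "\<not> m \<le> i"
      then have "?KF ! i = KNab" using KFlo by simp
      then show False using ij(3) by simp
    qed
    have "c = rev cs ! j" using wslo[OF jm] ij(7) by simp
    then have "c \<in> set cs" using jm c_nab.hyps(1) by (metis length_rev nth_mem set_rev)
    then have cp: "c \<notin> noms_p p" using c_nab.hyps(3) by auto
    have iml: "i - m < length xs" using ij(1) im Ds c_nab.prems(5) by auto
    have "noms (xs ! (i - m)) \<subseteq> noms_p (sb_p m xs p0)"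
      by (rule occ_pvc(3)[OF ij(4) im iml])
    then show "c \<notin> noms (?ws ! i)" using cp R0(2) wshi[OF im] by auto
  qed
  have all: "\<And>i. i < length ?G \<Longrightarrow> has_ty opn csig \<Phi> [] (?ws ! i) (?G ! i) \<and> okt (?ws ! i)"
  proof -
    fix i assume i: "i < length ?G"
    show "has_ty opn csig \<Phi> [] (?ws ! i) (?G ! i) \<and> okt (?ws ! i)"
    proof (cases "i < m")
      case True
      then obtain c where "?ws ! i = Nom c" "\<Phi> c = Some (?G ! i)" using nab by blast
      then show ?thesis by (auto intro: has_ty_rule_ty_pat_ty.t_nom)
    next
      case False
      then have K: "?KF ! i = KAll" using KFhi i by simp
      then have "pvc i p0 \<noteq> 0" using conds i lKF by auto
      then show ?thesis
        using match_all(3)[OF pm Ds(2) c_nab.prems(8) c_nab.prems(9) lws lKF lcws okp h1 h2 h3 i K] by simp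
    qed
  qed
  have okws: "list_all okt ?ws" using all lws by (auto simp: list_all_length)
  have "has_ty opn csig \<Phi> [] (sb (length ([]::ty list)) ?ws u0) A"
    by (rule ty_sb[of opn csig \<Phi> "[]" ?G u0 A ?ws]) (use Ds lws all oku lcws okws in auto)
  then show ?case using PU ok_sb[OF lcws okws oku] by simp
qed



inductive_cases ht_Lam: "has_ty opn csig \<Phi> \<Gamma> (Lam M) A"
inductive_cases ht_App: "has_ty opn csig \<Phi> \<Gamma> (App M N) A"
inductive_cases ht_Let: "has_ty opn csig \<Phi> \<Gamma> (Let M N) A"
inductive_cases ht_Fix: "has_ty opn csig \<Phi> \<Gamma> (Fix M) A"
inductive_cases ht_New: "has_ty opn csig \<Phi> \<Gamma> (New M) A"
inductive_cases ht_At: "has_ty opn csig \<Phi> \<Gamma> (At M N) A"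
inductive_cases ht_Match: "has_ty opn csig \<Phi> \<Gamma> (Match M Rs) A"

lemma ty_inst0: "has_ty opn csig \<Phi> [C] t A \<Longrightarrow> okt t \<Longrightarrow> has_ty opn csig \<Phi> [] s C
  \<Longrightarrow> has_ty opn csig \<Phi> [] (inst 0 s t) A"
  using ty_inst(1)[of opn csig \<Phi> "[C]" t A C "[]"] by auto

lemma fresh_step:
  assumes "has_ty opn csig \<Phi> [C] E A" "okt E" "c \<notin> noms E"
  shows "has_ty opn csig (\<Phi>(c := Some C)) [] (inst 0 (Nom c) E) A \<and> okt (inst 0 (Nom c) E)"
proof -
  have "has_ty opn csig (\<Phi>(c := Some C)) [C] E A" using assms(1,3) by (auto intro: ty_phi(1))
  moreover have "has_ty opn csig (\<Phi>(c := Some C)) [] (Nom c) C"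
    by (rule has_ty_rule_ty_pat_ty.t_nom) simp
  ultimately show ?thesis using ty_inst0 assms(2) ok_inst(1)[of "Nom c" E 0] by auto
qed

lemma eval_pres:
  "eval E V \<Longrightarrow> (\<And>\<Phi> A. has_ty opn csig \<Phi> [] E A \<Longrightarrow> okt E \<Longrightarrow> has_ty opn csig \<Phi> [] V A \<and> okt V)"
  "evalm T Rs V \<Longrightarrow> (\<And>\<Phi> A B. has_ty opn csig \<Phi> [] T B \<Longrightarrow> okt T
     \<Longrightarrow> list_all (\<lambda>R. rule_ty opn csig \<Phi> [] B R A) Rs \<Longrightarrow> list_all (okr []) Rs
     \<Longrightarrow> has_ty opn csig \<Phi> [] V A \<and> okt V)"
proof (induction rule: eval_evalm.inducts)
  case (e_con Ms Vs c)
  from e_con.prems(1) obtain As b where t: "csig c = Some (As, b)" "A = TPrim b"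
    "list_all2 (has_ty opn csig \<Phi> []) Ms As" by (auto elim: ht_Con)
  have l: "length Ms = length Vs" "length Ms = length As" using e_con.IH t(3) by (auto dest: list_all2_lengthD)
  have "\<forall>i<length Vs. has_ty opn csig \<Phi> [] (Vs ! i) (As ! i) \<and> okt (Vs ! i)"
  proof (intro allI impI)
    fix i assume i: "i < length Vs"
    have "eval (Ms ! i) (Vs ! i) \<and> (\<forall>\<Phi> A. has_ty opn csig \<Phi> [] (Ms ! i) A \<longrightarrow> okt (Ms ! i)
            \<longrightarrow> has_ty opn csig \<Phi> [] (Vs ! i) A \<and> okt (Vs ! i))"
      using e_con.IH i l by (auto simp: list_all2_conv_all_nth)
    moreover have "has_ty opn csig \<Phi> [] (Ms ! i) (As ! i)" using t(3) i l by (auto simp: list_all2_conv_all_nth)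
    moreover have "okt (Ms ! i)" using e_con.prems(2) i l by (auto simp: list_all_iff)
    ultimately show "has_ty opn csig \<Phi> [] (Vs ! i) (As ! i) \<and> okt (Vs ! i)" by blast
  qed
  then show ?case using t l
    by (auto intro!: has_ty_rule_ty_pat_ty.t_con simp: list_all2_conv_all_nth list_all_length)
next
  case (e_pair M V N W)
  then show ?case by (auto elim!: ht_Pair intro!: has_ty_rule_ty_pat_ty.t_pair)
next
  case (e_new c E V)
  from e_new.prems(1) obtain C where t: "open_ty opn C" "has_ty opn csig \<Phi> [C] E A" by (auto elim: ht_New)
  have st: "has_ty opn csig (\<Phi>(c := Some C)) [] (inst 0 (Nom c) E) A \<and> okt (inst 0 (Nom c) E)"
    using fresh_step[OF t(2)] e_new.prems(2) e_new.hyps(1) by auto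
  then have r: "has_ty opn csig (\<Phi>(c := Some C)) [] V A \<and> okt V" using e_new.IH by blast
  then show ?case using e_new.hyps(1) ty_phi(1)[of opn csig "\<Phi>(c := Some C)" "[]" V A \<Phi>] by auto
next
  case (e_app M R N U V)
  from e_app.prems(1) obtain A' where t: "has_ty opn csig \<Phi> [] M (TArr A' A)" "has_ty opn csig \<Phi> [] N A'"
    by (auto elim: ht_App)
  have m: "has_ty opn csig \<Phi> [] (Lam R) (TArr A' A) \<and> okt (Lam R)" using e_app.IH(1) t e_app.prems by auto
  then have r: "has_ty opn csig \<Phi> [A'] R A" by (auto elim: ht_Lam)
  have n: "has_ty opn csig \<Phi> [] U A' \<and> okt U" using e_app.IH(2) t e_app.prems by auto
  have "has_ty opn csig \<Phi> [] (inst 0 U R) A \<and> okt (inst 0 U R)"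
    using ty_inst0[OF r _ n[THEN conjunct1]] m n ok_inst(1) by auto
  then show ?case using e_app.IH(3) by blast
next
  case (e_let M U R V)
  from e_let.prems(1) obtain A' where t: "has_ty opn csig \<Phi> [] M A'" "has_ty opn csig \<Phi> [A'] R A"
    by (auto elim: ht_Let)
  have n: "has_ty opn csig \<Phi> [] U A' \<and> okt U" using e_let.IH(1) t e_let.prems by auto
  have "has_ty opn csig \<Phi> [] (inst 0 U R) A \<and> okt (inst 0 U R)"
    using ty_inst0[OF t(2) _ n[THEN conjunct1]] e_let.prems n ok_inst(1) by auto
  then show ?case using e_let.IH(2) by blast
next
  case (e_fix R V)
  from e_fix.prems(1) obtain A1 A2 where t: "A = TArr A1 A2" "has_ty opn csig \<Phi> [TArr A1 A2] R (TArr A1 A2)"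
    by (auto elim: ht_Fix)
  have "has_ty opn csig \<Phi> [] (inst 0 (Fix R) R) A \<and> okt (inst 0 (Fix R) R)"
    using ty_inst0[OF t(2) _ e_fix.prems(1)[unfolded t(1)]] e_fix.prems t ok_inst(1)[of "Fix R" R 0] by auto
  then show ?case using e_fix.IH by blast
next
  case (e_at M R X V)
  from e_at.prems(1) obtain A' where t: "has_ty opn csig \<Phi> [] M (TBind A' A)" "has_ty opn csig \<Phi> [] X A'"
    by (auto elim: ht_At)
  have m: "has_ty opn csig \<Phi> [] (Back R) (TBind A' A) \<and> okt (Back R)" using e_at.IH(1) t e_at.prems by auto
  then have r: "has_ty opn csig \<Phi> [A'] R A" by (auto elim: ht_Back)
  have "has_ty opn csig \<Phi> [] (inst 0 X R) A \<and> okt (inst 0 X R)"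
    using ty_inst0[OF r _ t(2)] m e_at.prems ok_inst(1)[of X R 0] by auto
  then show ?case using e_at.IH(2) by blast
next
  case (e_back c E W)
  from e_back.prems(1) obtain C B where t: "A = TBind C B" "open_ty opn C" "has_ty opn csig \<Phi> [C] E B"
    by (auto elim: ht_Back)
  let ?\<Phi> = "\<Phi>(c := Some C)"
  have st: "has_ty opn csig ?\<Phi> [] (inst 0 (Nom c) E) B \<and> okt (inst 0 (Nom c) E)"
    using fresh_step[OF t(3)] e_back.prems(2) e_back.hyps(1) by auto
  then have r: "has_ty opn csig ?\<Phi> [] W B \<and> okt W" using e_back.IH by blast
  have "has_ty opn csig ?\<Phi> [C] (close 0 c W) B" using ty_close0[OF r[THEN conjunct1]] by simp
  then have "has_ty opn csig ?\<Phi> [] (Back (close 0 c W)) (TBind C B)"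
    using t(2) by (auto intro: has_ty_rule_ty_pat_ty.t_back)
  then have "has_ty opn csig \<Phi> [] (Back (close 0 c W)) (TBind C B)"
    using ty_phi(1)[of opn csig ?\<Phi> "[]" "Back (close 0 c W)" "TBind C B" \<Phi>] noms_close(1)[of c 0 W] by auto
  then show ?case using t(1) r ok_close(1)[of W 0 c] by simp
next
  case (e_match M T Rs V)
  from e_match.prems(1) obtain B where t: "has_ty opn csig \<Phi> [] M B"
    "list_all (\<lambda>R. rule_ty opn csig \<Phi> [] B R A) Rs" by (auto elim: ht_Match)
  have "has_ty opn csig \<Phi> [] T B \<and> okt T" using e_match.IH(1) t e_match.prems by auto
  then show ?case using e_match.IH(2)[OF _ _ t(2)] e_match.prems by auto
next
  case (em_hit T R U V Rs)
  have "has_ty opn csig \<Phi> [] U A \<and> okt U"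
    apply (rule clause_pres[OF em_hit.hyps(1), where xs="[]" and \<Gamma>="[]" and K="[]" and B=B])
    apply (rule sb_nil(2)[symmetric])
    using em_hit.prems by auto
  then show ?case using em_hit.IH by blast
next
  case (em_skip T R Rs V)
  then show ?case by auto
qed auto

theorem mainTheorem2:
  fixes opn :: "string \<Rightarrow> bool"
    and csig :: "string \<Rightarrow> (ty list \<times> string) option"
    and E V :: tm and A :: ty
  assumes "restr E"
    and "has_ty opn csig Map.empty [] E A"
    and "eval E V"
  shows "has_ty opn csig Map.empty [] V A"
  using eval_pres(1)[OF assms(3) assms(2) restr_ok(1)[OF assms(1)]] by simp


end
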